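(* Consider the event-triggered distributed estimator and the centralized estimator described in the context, and suppose: (i) the communication graph is connected, i.e. $\lambda_2(\mathcal{L})>0$; (ii) $G=\sum_{i=1}^N H_i^TH_i$ is full rank; (iii) there is $\epsilon_1>0$ with $\mathbb{E}\{\|V(t)\|^{2+\epsilon_1}\}<\infty$; (iv) the step sizes are $\alpha(t)=\frac{a}{(t+1)^{\tau_1}}$ and $\beta(t)=\frac{b}{(t+1)^{\tau_2}}$ with $a,b>0$, $0<\tau_2\le\tau_1\le 1$, and $\tau_1>\max\{\tau_2+\frac{1}{2+\epsilon_1},0.5\}$; (v) the centralized estimator uses $\alpha_c(t)=\frac{a_c}{(t+1)^{\tau_c}}$ with $\tau_c=\tau_1$ and $a_c=a$. Let $\rho_0=\min_{j\in\mathcal{V}}\rho_j$ and suppose $\rho_0>\tau_1-\tau_2$. Let $\tau_0$ satisfy $0\le\tau_0<\min\{\tau_1-\tau_2-\frac{1}{2+\epsilon_1},\ \rho_0+\tau_2-\tau_1\}$, and if $\tau_1=1$ assume in addition $a>\frac{N\tau_0}{\lambda_{\min}(G)}$. Then for every $i\in\mathcal{V}$, $\mathbb{P}\big(\lim_{t\to\infty}(t+1)^{\tau_0}\|x_i(t)-u(t)\|=0\big)=1$.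
   Context: An unknown parameter $\theta\in\mathbb{R}^n$ is observed by $N$ agents $\mathcal{V}=\{1,\dots,N\}$ via $y_i(t)=H_i\theta+v_i(t)$, $t=0,1,2,\dots$, where $H_i\in\mathbb{R}^{m_i\times n}$ is known and the noise $v_i(t)\in\mathbb{R}^{m_i}$ is zero mean with covariance $R_i$. The stacked noise $V(t)=[v_1(t)^T,\dots,v_N(t)^T]^T$ is i.i.d. over time (noises of different agents at the same time may be correlated). Agents communicate over an undirected graph without self-loops with adjacency matrix $\mathcal{A}=[a_{ij}]\in\{0,1\}^{N\times N}$, neighbor sets $\mathcal{N}_i=\{j: a_{ij}=1\}$, degree matrix $\mathcal{D}$ and Laplacian $\mathcal{L}=\mathcal{D}-\mathcal{A}$. Each agent $i$ has a threshold exponent $\rho_i>0$. Agent $i$ keeps an estimate $x_i(t)\in\mathbb{R}^n$ (arbitrary deterministic initial value $x_i(0)$, which is the first transmitted value). Let $t_k^i$ be the latest triggering (transmission) time of agent $i$. At time $t$, agent $i$ triggers (broadcasts $x_i(t)$ to its neighbors, which then becomes its latest transmitted value) iff $\|x_i(t)-x_i(t_k^i)\|>\frac{1}{(t+1)^{\rho_i}}$. Denoting by $x_j(t_k^j)$ the latest value transmitted by agent $j$ up to and including time $t$, the distributed estimator is $x_i(t+1)=x_i(t)+\alpha(t)H_i^T\big(y_i(t)-H_ix_i(t)\big)+\beta(t)\sum_{j\in\mathcal{N}_i}\big(x_j(t_k^j)-x_i(t)\big)$. The centralized linear estimator uses the same measurements: $u(t+1)=u(t)+\frac{\alpha_c(t)}{N}\sum_{i=1}^N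 H_i^T\big(y_i(t)-H_iu(t)\big)$ with arbitrary deterministic initial value $u(0)$. *)

theory Defs
  imports "HOL-Probability.Probability"
begin

text \<open>Agents are 0,...,N-1. The parameter lives in real^'n (n = CARD('n)).
  Agent i observes m i scalar components; H i l j is entry (l,j) of H_i (l < m i).
  Noise: v i t w l is component l of v_i(t) at sample point w.
  adj i j : adjacency relation of the communication graph.\<close>

definition Hmul :: "(nat \<Rightarrow> nat \<Rightarrow> 'n::finite \<Rightarrow> real) \<Rightarrow> nat \<Rightarrow> real^'n \<Rightarrow> nat \<Rightarrow> real" where
  "Hmul H i x = (\<lambda>l. \<Sum>j\<in>UNIV. H i l j * x $ j)"

definition HTmul :: "(nat \<Rightarrow> nat \<Rightarrow> 'n::finite \<Rightarrow> real) \<Rightarrow> (nat \<Rightarrow> nat) \<Rightarrow> nat \<Rightarrow> (nat \<Rightarrow> real) \<Rightarrow> real^'n" where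
  "HTmul H m i y = (\<chi> j. \<Sum>l<m i. H i l j * y l)"

definition meas :: "(nat \<Rightarrow> nat \<Rightarrow> 'n::finite \<Rightarrow> real) \<Rightarrow> (nat \<Rightarrow> nat \<Rightarrow> 'a \<Rightarrow> nat \<Rightarrow> real)
    \<Rightarrow> real^'n \<Rightarrow> nat \<Rightarrow> nat \<Rightarrow> 'a \<Rightarrow> nat \<Rightarrow> real" where
  "meas H v \<theta> i t \<omega> = (\<lambda>l. Hmul H i \<theta> l + v i t \<omega> l)"

definition innov :: "(nat \<Rightarrow> nat \<Rightarrow> 'n::finite \<Rightarrow> real) \<Rightarrow> (nat \<Rightarrow> nat) \<Rightarrow> (nat \<Rightarrow> nat \<Rightarrow> 'a \<Rightarrow> nat \<Rightarrow> real)
    \<Rightarrow> real^'n \<Rightarrow> nat \<Rightarrow> nat \<Rightarrow> 'a \<Rightarrow> real^'n \<Rightarrow> real^'n" where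
  "innov H m v \<theta> i t \<omega> z = HTmul H m i (\<lambda>l. meas H v \<theta> i t \<omega> l - Hmul H i z l)"

text \<open>State of the event-triggered estimator at time t: the pair (x(t), xhat(t)) where
  x i = x_i(t) and xhat i = latest value transmitted by agent i up to and including time t.
  x_i(0) is the first transmitted value.\<close>
primrec et_state ::
  "nat \<Rightarrow> (nat \<Rightarrow> nat \<Rightarrow> bool) \<Rightarrow> (nat \<Rightarrow> nat \<Rightarrow> 'n::finite \<Rightarrow> real) \<Rightarrow> (nat \<Rightarrow> nat)
   \<Rightarrow> (nat \<Rightarrow> nat \<Rightarrow> 'a \<Rightarrow> nat \<Rightarrow> real) \<Rightarrow> real^'n \<Rightarrow> (nat \<Rightarrow> real) \<Rightarrow> (nat \<Rightarrow> real)
   \<Rightarrow> (nat \<Rightarrow> real) \<Rightarrow> (nat \<Rightarrow> real^'n) \<Rightarrow> 'a \<Rightarrow> nat \<Rightarrow> (nat \<Rightarrow> real^'n) \<times> (nat \<Rightarrow> real^'n)"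
where
  "et_state N adj H m v \<theta> \<alpha> \<beta> \<rho> x0 \<omega> 0 = (x0, x0)"
| "et_state N adj H m v \<theta> \<alpha> \<beta> \<rho> x0 \<omega> (Suc t) =
     (let x = fst (et_state N adj H m v \<theta> \<alpha> \<beta> \<rho> x0 \<omega> t);
          xh = snd (et_state N adj H m v \<theta> \<alpha> \<beta> \<rho> x0 \<omega> t);
          x' = (\<lambda>i. x i + \<alpha> t *\<^sub>R innov H m v \<theta> i t \<omega> (x i)
                      + \<beta> t *\<^sub>R (\<Sum>j\<in>{j. j < N \<and> adj i j}. xh j - x i));
          xh' = (\<lambda>i. if norm (x' i - xh i) > 1 / (real (Suc t) + 1) powr \<rho> i then x' i else xh i)
      in (x', xh'))"

definition et_est where
  "et_est N adj H m v \<theta> \<alpha> \<beta> \<rho> x0 \<omega> t i = fst (et_state N adj H m v \<theta> \<alpha> \<beta> \<rho> x0 \<omega> t) i"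

primrec cent_est ::
  "nat \<Rightarrow> (nat \<Rightarrow> nat \<Rightarrow> 'n::finite \<Rightarrow> real) \<Rightarrow> (nat \<Rightarrow> nat) \<Rightarrow> (nat \<Rightarrow> nat \<Rightarrow> 'a \<Rightarrow> nat \<Rightarrow> real)
   \<Rightarrow> real^'n \<Rightarrow> (nat \<Rightarrow> real) \<Rightarrow> real^'n \<Rightarrow> 'a \<Rightarrow> nat \<Rightarrow> real^'n"
where
  "cent_est N H m v \<theta> \<alpha>c u0 \<omega> 0 = u0"
| "cent_est N H m v \<theta> \<alpha>c u0 \<omega> (Suc t) =
     cent_est N H m v \<theta> \<alpha>c u0 \<omega> t + (\<alpha>c t / real N) *\<^sub>R
       (\<Sum>i<N. innov H m v \<theta> i t \<omega> (cent_est N H m v \<theta> \<alpha>c u0 \<omega> t))"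

definition undirected_simple :: "nat \<Rightarrow> (nat \<Rightarrow> nat \<Rightarrow> bool) \<Rightarrow> bool" where
  "undirected_simple N adj \<longleftrightarrow> (\<forall>i<N. \<forall>j<N. adj i j = adj j i) \<and> (\<forall>i<N. \<not> adj i i)"

definition graph_connected :: "nat \<Rightarrow> (nat \<Rightarrow> nat \<Rightarrow> bool) \<Rightarrow> bool" where
  "graph_connected N adj \<longleftrightarrow>
     (\<forall>i<N. \<forall>j<N. (\<lambda>a b. a < N \<and> b < N \<and> adj a b)\<^sup>*\<^sup>* i j)"

definition gram :: "nat \<Rightarrow> (nat \<Rightarrow> nat \<Rightarrow> 'n::finite \<Rightarrow> real) \<Rightarrow> (nat \<Rightarrow> nat) \<Rightarrow> real^'n^'n" where
  "gram N H m = (\<chi> j k. \<Sum>i<N. \<Sum>l<m i. H i l j * H i l k)"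

definition lambda_min :: "real^'n^'n \<Rightarrow> real" where
  "lambda_min A = Inf {\<mu>. \<exists>x. x \<noteq> 0 \<and> A *v x = \<mu> *\<^sub>R x}"

definition noise_idx :: "nat \<Rightarrow> (nat \<Rightarrow> nat) \<Rightarrow> (nat \<times> nat) set" where
  "noise_idx N m = Sigma {..<N} (\<lambda>i. {..<m i})"

definition noise_space :: "nat \<Rightarrow> (nat \<Rightarrow> nat) \<Rightarrow> ((nat \<times> nat) \<Rightarrow> real) measure" where
  "noise_space N m = PiM (noise_idx N m) (\<lambda>_. borel)"

definition stacked_noise :: "nat \<Rightarrow> (nat \<Rightarrow> nat) \<Rightarrow> (nat \<Rightarrow> nat \<Rightarrow> 'a \<Rightarrow> nat \<Rightarrow> real) \<Rightarrow> nat \<Rightarrow> 'a \<Rightarrow> (nat \<times> nat) \<Rightarrow> real" where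
  "stacked_noise N m v t \<omega> = restrict (\<lambda>(i, l). v i t \<omega> l) (noise_idx N m)"

definition noise_norm :: "nat \<Rightarrow> (nat \<Rightarrow> nat) \<Rightarrow> (nat \<Rightarrow> nat \<Rightarrow> 'a \<Rightarrow> nat \<Rightarrow> real) \<Rightarrow> nat \<Rightarrow> 'a \<Rightarrow> real" where
  "noise_norm N m v t \<omega> = sqrt (\<Sum>i<N. \<Sum>l<m i. (v i t \<omega> l)\<^sup>2)"

end

theory Submission
  imports Defs
begin

lemma bern_neg:
  fixes x r :: real
  assumes "0 \<le> x" "0 < r"
  shows "1 - r * x \<le> (1 + x) powr (- r)"
proof (cases "r * x \<ge> 1")
  case True
  then show ?thesis using assms by (smt (verit) powr_ge_zero)
next
  case False
  have "ln (1 + x) \<le> x" using assms by (intro ln_add_one_self_le_self) auto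
  hence a: "(1 + x) powr r \<le> exp (r * x)" using assms
    by (simp add: powr_def mult_left_mono)
  have b: "1 - r * x \<le> exp (- (r * x))" using exp_ge_add_one_self[of "-(r*x)"] by simp
  have "(1 - r * x) * (1 + x) powr r \<le> exp (- (r * x)) * exp (r * x)"
    using False a b by (intro mult_mono) auto
  also have "\<dots> = 1" by (simp flip: exp_add)
  finally have 1: "(1 - r * x) * (1 + x) powr r \<le> 1" .
  have P: "(1 + x) powr r > 0" using assms by simp
  have "(1 + x) powr (- r) = 1 / (1 + x) powr r" using assms by (simp add: powr_minus_divide)
  moreover have "1 - r * x \<le> 1 / (1 + x) powr r" using 1 P by (simp add: le_divide_eq)
  ultimately show ?thesis by simp
qed

lemma step_pow:
  fixes q r :: real
  assumes "1 \<le> q"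
  shows "q powr (-r) * (1 - max r 0 / q) \<le> (q + 1) powr (-r)"
proof (cases "r > 0")
  case True
  have "q + 1 = q * (1 + 1/q)" using assms by (simp add: field_simps)
  hence "(q + 1) powr (-r) = q powr (-r) * (1 + 1/q) powr (-r)"
    using assms by (simp add: powr_mult)
  moreover have "1 - r * (1/q) \<le> (1 + 1/q) powr (-r)" using assms True by (intro bern_neg) auto
  ultimately show ?thesis using True assms by (simp add: mult_left_mono)
next
  case False
  then show ?thesis using assms by (simp add: powr_mono2)
qed

lemma tendsto_q_powr:
  assumes "e < 0"
  shows "((\<lambda>t::nat. (real t + 1) powr e) \<longlongrightarrow> 0) sequentially"
proof -
  have "filterlim (\<lambda>t::nat. 1 + real t) at_top sequentially"
    by (rule filterlim_tendsto_add_at_top[OF tendsto_const filterlim_real_sequentially])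
  hence "filterlim (\<lambda>t::nat. real t + 1) at_top sequentially" by (simp add: add.commute)
  thus ?thesis using tendsto_neg_powr assms by blast
qed

lemma ev_q_powr_le:
  assumes "e < 0" "0 < d"
  shows "eventually (\<lambda>t::nat. (real t + 1) powr e \<le> d) sequentially"
proof -
  have "eventually (\<lambda>t::nat. dist ((real t + 1) powr e) 0 < d) sequentially"
    using tendsto_q_powr[OF assms(1)] assms(2) by (rule tendstoD)
  thus ?thesis by eventually_elim auto
qed

lemma scalar_rec:
  fixes s :: "nat \<Rightarrow> real" and p c r K :: real
  assumes p: "0 < p" "p \<le> 1" and c: "0 < c" and cr: "p = 1 \<Longrightarrow> max r 0 < c"
    and K: "0 \<le> K"
    and ev: "eventually (\<lambda>t. 0 \<le> s t \<and> s (Suc t) \<le> (1 - c * (real t + 1) powr (-p)) * s t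
                                 + K * (real t + 1) powr (-(p + r))) sequentially"
  shows "\<exists>B. eventually (\<lambda>t. s t \<le> B * (real t + 1) powr (-r)) sequentially"
proof -
  define r' where "r' = max r 0"
  define \<delta> where "\<delta> = (if p < 1 then c/2 else c - r')"
  have \<delta>: "0 < \<delta>" using c cr p unfolding \<delta>_def r'_def by auto
  have e1: "eventually (\<lambda>t::nat. r' * (real t + 1) powr (p - 1) \<le> c - \<delta>) sequentially"
  proof (cases "p < 1")
    case True
    have "eventually (\<lambda>t::nat. (real t + 1) powr (p - 1) \<le> c / 2 / (r' + 1)) sequentially"
      using True c by (intro ev_q_powr_le) (auto simp: r'_def)
    thus ?thesis
    proof eventually_elim
      case (elim t)
      have "r' * (real t + 1) powr (p - 1) \<le> (r' + 1) * (c / 2 / (r' + 1))"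
        using elim by (intro mult_mono) (auto simp: r'_def)
      also have "\<dots> = c / 2"
      proof -
        have "r' + 1 \<noteq> 0" by (simp add: r'_def add_nonneg_pos)
        thus ?thesis by (simp add: field_simps)
      qed
      finally show ?case using True by (simp add: \<delta>_def)
    qed
  next
    case False
    hence "p = 1" using p by auto
    thus ?thesis by (simp add: \<delta>_def)
  qed
  have e2: "eventually (\<lambda>t::nat. (real t + 1) powr (-p) \<le> 1 / c) sequentially"
    using p c by (intro ev_q_powr_le) auto
  from eventually_conj[OF ev eventually_conj[OF e1 e2]] obtain T where
    T: "\<And>t. t \<ge> T \<Longrightarrow> 0 \<le> s t \<and> s (Suc t) \<le> (1 - c * (real t + 1) powr (-p)) * s t
                                 + K * (real t + 1) powr (-(p + r))
        \<and> r' * (real t + 1) powr (p - 1) \<le> c - \<delta> \<and> (real t + 1) powr (-p) \<le> 1 / c"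
    unfolding eventually_sequentially by blast
  define B where "B = max (K / \<delta>) (s T * (real T + 1) powr r)"
  have B0: "0 \<le> B" using K \<delta> unfolding B_def by (simp add: le_max_iff_disj)
  have KB: "K \<le> B * \<delta>"
  proof -
    have "K / \<delta> \<le> B" unfolding B_def by simp
    thus ?thesis using \<delta> by (simp add: divide_le_eq)
  qed
  have "s t \<le> B * (real t + 1) powr (-r)" if "t \<ge> T" for t
    using that
  proof (induction t rule: dec_induct)
    case base
    have "s T = s T * (real T + 1) powr r * (real T + 1) powr (-r)"
      by (simp add: powr_minus field_simps)
    also have "\<dots> \<le> B * (real T + 1) powr (-r)"
      unfolding B_def by (intro mult_right_mono) auto
    finally show ?case .
  next
    case (step t)
    define q where "q = real t + 1"
    have q1: "1 \<le> q" unfolding q_def by simp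
    from T[OF step(1)] have Tt: "0 \<le> s t" "s (Suc t) \<le> (1 - c * q powr (-p)) * s t + K * q powr (-(p + r))"
      "r' * q powr (p - 1) \<le> c - \<delta>" "q powr (-p) \<le> 1 / c" unfolding q_def by auto
    have nn: "0 \<le> 1 - c * q powr (-p)" using Tt(4) c by (simp add: field_simps)
    have qp: "q powr (-p) > 0" "q powr (-r) > 0" using q1 by auto
    have "s (Suc t) \<le> (1 - c * q powr (-p)) * (B * q powr (-r)) + K * q powr (-(p + r))"
      using Tt(2) mult_left_mono[OF step(3)[folded q_def] nn] by linarith
    also have "\<dots> \<le> q powr (-r) * (1 - r' / q) * B"
    proof -
      have a1: "q powr (-p) * q powr (p - 1) = q powr (-1)" using q1 by (simp add: powr_add[symmetric])
      have a2: "q powr (-1) = 1 / q" using q1 by (simp add: powr_minus_divide)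
      have qm1: "r' / q = r' * (q powr (-p) * q powr (p - 1))" unfolding a1 a2 by simp
      have pr: "q powr (-(p + r)) = q powr (-r) * q powr (-p)" using q1 by (simp add: powr_add[symmetric] add.commute)
      have "K + B * (r' * q powr (p - 1)) \<le> B * \<delta> + B * (c - \<delta>)"
        using KB Tt(3) B0 by (intro add_mono mult_left_mono) auto
      hence h: "0 \<le> c * B - B * (r' * q powr (p - 1)) - K" by (simp add: algebra_simps)
      have "0 \<le> q powr (-r) * q powr (-p) * (c * B - B * (r' * q powr (p - 1)) - K)"
        using qp h by simp
      thus ?thesis unfolding qm1 pr by (simp add: algebra_simps)
    qed
    also have "\<dots> \<le> (q + 1) powr (-r) * B"
      using step_pow[OF q1, of r] B0 unfolding r'_def by (intro mult_right_mono) auto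
    finally show ?case unfolding q_def by (simp add: add.commute mult.commute)
  qed
  thus ?thesis unfolding eventually_sequentially by blast
qed


lemma mv_sum_left: "finite A \<Longrightarrow> (\<Sum>i\<in>A. M i) *v x = (\<Sum>i\<in>A. M i *v (x::real^'n))"
  for M :: "'b \<Rightarrow> real^'n^'m"
  by (induction A rule: finite_induct) (auto simp: matrix_vector_mult_add_rdistrib)

lemma mv_sum_right: "finite A \<Longrightarrow> M *v (\<Sum>i\<in>A. x i) = (\<Sum>i\<in>A. M *v (x i::real^'n))"
  for M :: "real^'n^'m"
  by (induction A rule: finite_induct) (auto simp: matrix_vector_right_distrib)

lemma sym_inner:
  fixes A :: "real^'n^'n"
  assumes "transpose A = A"
  shows "x \<bullet> (A *v y) = (A *v x) \<bullet> y"
proof -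
  have "x \<bullet> (A *v y) = (x v* A) \<bullet> y" by (simp add: dot_lmul_matrix)
  also have "x v* A = transpose A *v x" by simp
  finally show ?thesis using assms by simp
qed

lemma quad_neg_aux:
  fixes c d t :: real
  assumes "0 \<le> d" "c \<noteq> 0" "t * (d + 1) = - c"
  shows "2 * t * c + t^2 * d < 0"
proof -
  have "(2 * t * c + t^2 * d) * (d + 1)^2 = 2 * c * (d + 1) * (t * (d + 1)) + d * (t * (d + 1))^2"
    by (simp add: power2_eq_square algebra_simps)
  also have "\<dots> = - (c * c) * (d + 2)" unfolding assms(3) by (simp add: power2_eq_square algebra_simps)
  also have "\<dots> < 0"
  proof -
    have "c * c > 0" using assms(2) by (simp add: zero_less_mult_iff linorder_neq_iff) blast
    moreover have "d + 2 > 0" using assms(1) by simp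
    ultimately show ?thesis by simp
  qed
  finally have "(2 * t * c + t^2 * d) * (d + 1)^2 < 0" .
  moreover have "(d + 1)^2 > 0" using assms by simp
  ultimately show ?thesis by (simp add: mult_less_0_iff)
qed

lemma rayleigh:
  fixes A :: "real^'n^'n"
  assumes sym: "transpose A = A" and pd: "\<And>x. x \<noteq> 0 \<Longrightarrow> 0 < x \<bullet> (A *v x)"
  shows "lambda_min A > 0 \<and> (\<forall>x. lambda_min A * (norm x)\<^sup>2 \<le> x \<bullet> (A *v x))"
proof -
  define Q where "Q x = x \<bullet> (A *v x)" for x
  have cont: "continuous_on (sphere 0 1) Q" unfolding Q_def
    by (intro continuous_intros linear_continuous_on matrix_vector_mul_bounded_linear)
  obtain k :: 'n where True by simp
  have ne: "sphere (0::real^'n) 1 \<noteq> {}" using norm_axis_1[of k]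
    by (metis dist_0_norm empty_iff mem_sphere)
  obtain x0 where x0: "x0 \<in> sphere 0 1" and min: "\<And>y. y \<in> sphere 0 1 \<Longrightarrow> Q x0 \<le> Q y"
    using continuous_attains_inf[OF compact_sphere ne cont] by blast
  define \<mu> where "\<mu> = Q x0"
  have nx0: "norm x0 = 1" using x0 by simp
  have "x0 \<noteq> 0" using nx0 by auto
  hence mu_pos: "\<mu> > 0" unfolding \<mu>_def Q_def using pd by auto
  have Qscale: "Q (c *\<^sub>R y) = c^2 * Q y" for c y
    unfolding Q_def by (simp add: matrix_vector_mult_scaleR power2_eq_square)
  have lower: "\<mu> * (norm y)\<^sup>2 \<le> Q y" for y
  proof (cases "y = 0")
    case True then show ?thesis by (simp add: Q_def)
  next
    case False
    hence ny: "norm y > 0" by simp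
    have "(inverse (norm y)) *\<^sub>R y \<in> sphere 0 1" using ny by (simp add: norm_scaleR)
    hence "\<mu> \<le> Q ((inverse (norm y)) *\<^sub>R y)" unfolding \<mu>_def by (rule min)
    also have "\<dots> = Q y / (norm y)^2" unfolding Qscale by (simp add: power_inverse divide_inverse)
    finally show ?thesis using ny by (simp add: le_divide_eq)
  qed
  define g where "g = A *v x0 - \<mu> *\<^sub>R x0"
  have expand: "Q (x0 + t *\<^sub>R g) - \<mu> * (norm (x0 + t *\<^sub>R g))\<^sup>2
      = 2 * t * (g \<bullet> g) + t^2 * (Q g - \<mu> * (norm g)\<^sup>2)" for t
  proof -
    have s1: "g \<bullet> (A *v x0) = (A *v g) \<bullet> x0" using sym_inner[OF sym] by simp
    have e1: "Q (x0 + t *\<^sub>R g) = Q x0 + 2 * t * (g \<bullet> (A *v x0)) + t^2 * Q g"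
      unfolding Q_def using s1
      by (simp add: matrix_vector_right_distrib matrix_vector_mult_scaleR inner_add_left inner_add_right
          algebra_simps power2_eq_square inner_commute)
    have e2: "(norm (x0 + t *\<^sub>R g))\<^sup>2 = 1 + 2 * t * (g \<bullet> x0) + t^2 * (norm g)\<^sup>2"
    proof -
      have xx: "x0 \<bullet> x0 = 1" using nx0 by (simp add: dot_square_norm)
      have gg: "g \<bullet> g = (norm g)\<^sup>2" by (simp add: dot_square_norm)
      have "(norm (x0 + t *\<^sub>R g))\<^sup>2 = (x0 + t *\<^sub>R g) \<bullet> (x0 + t *\<^sub>R g)"
        by (simp only: power2_norm_eq_inner)
      also have "\<dots> = x0 \<bullet> x0 + 2 * t * (g \<bullet> x0) + t^2 * (g \<bullet> g)"
        by (simp add: inner_add_left inner_add_right algebra_simps power2_eq_square inner_commute)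
      finally show ?thesis unfolding xx gg .
    qed
    have e3: "g \<bullet> (A *v x0) = g \<bullet> g + \<mu> * (g \<bullet> x0)" unfolding g_def
      by (simp add: inner_diff_right)
    show ?thesis unfolding e1 e2 e3 \<mu>_def[symmetric] by (simp add: algebra_simps)
  qed
  have geq: "g = 0"
  proof (rule ccontr)
    assume "g \<noteq> 0"
    hence c: "g \<bullet> g > 0" by simp
    define d where "d = Q g - \<mu> * (norm g)\<^sup>2"
    have d: "d \<ge> 0" using lower[of g] unfolding d_def by simp
    define t where "t = - (g \<bullet> g) / (d + 1)"
    have "0 \<le> Q (x0 + t *\<^sub>R g) - \<mu> * (norm (x0 + t *\<^sub>R g))\<^sup>2" using lower by simp
    also have "\<dots> = 2 * t * (g \<bullet> g) + t^2 * d" unfolding expand d_def ..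
    also have "\<dots> < 0" using d c by (intro quad_neg_aux) (auto simp: t_def)
    finally show False by simp
  qed
  hence eig: "A *v x0 = \<mu> *\<^sub>R x0" unfolding g_def by simp
  define S where "S = {\<mu>'. \<exists>x. x \<noteq> 0 \<and> A *v x = \<mu>' *\<^sub>R x}"
  have x00: "x0 \<noteq> 0" using nx0 by auto
  have inS: "\<mu> \<in> S" unfolding S_def using eig x00 by blast
  have lbS: "\<mu> \<le> \<mu>'" if "\<mu>' \<in> S" for \<mu>'
  proof -
    have "\<exists>x. x \<noteq> 0 \<and> A *v x = \<mu>' *\<^sub>R x" using that unfolding S_def by (rule CollectD)
    then obtain x where x: "x \<noteq> 0" "A *v x = \<mu>' *\<^sub>R x" by (elim exE conjE)
    have "\<mu> * (norm x)\<^sup>2 \<le> Q x" by (rule lower)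
    also have "Q x = \<mu>' * (norm x)\<^sup>2" unfolding Q_def x(2) by (simp only: inner_scaleR_right dot_square_norm)
    finally have "\<mu> * (norm x)\<^sup>2 \<le> \<mu>' * (norm x)\<^sup>2" .
    moreover have "(norm x)\<^sup>2 > 0" using x(1) by simp
    ultimately show ?thesis by (simp add: mult_le_cancel_right_pos)
  qed
  have "lambda_min A = \<mu>" unfolding lambda_min_def S_def[symmetric]
    by (intro cInf_eq_minimum inS lbS)
  hence l1: "lambda_min A > 0" using mu_pos by simp
  have l2: "lambda_min A * (norm x)\<^sup>2 \<le> x \<bullet> (A *v x)" for x
    using lower[of x] \<open>lambda_min A = \<mu>\<close> unfolding Q_def by simp
  show ?thesis using l1 l2 by blast
qed


definition nbr :: "nat \<Rightarrow> (nat \<Rightarrow> nat \<Rightarrow> bool) \<Rightarrow> nat \<Rightarrow> nat set" where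
  "nbr N adj i = {j. j < N \<and> adj i j}"

definition Sd :: "nat \<Rightarrow> (nat \<Rightarrow> nat \<Rightarrow> bool) \<Rightarrow> (nat \<Rightarrow> real^'n) \<Rightarrow> real" where
  "Sd N adj z = (\<Sum>i<N. \<Sum>j\<in>nbr N adj i. (norm (z j - z i))\<^sup>2)"

lemma nbr_finite[simp]: "finite (nbr N adj i)" unfolding nbr_def by auto

lemma nbr_sub: "nbr N adj i \<subseteq> {..<N}" unfolding nbr_def by auto

lemma Sd_nonneg: "0 \<le> Sd N adj z" unfolding Sd_def by (intro sum_nonneg) auto

lemma Sd_term: assumes "i < N" "j < N" "adj i j" shows "(norm (z j - z i))\<^sup>2 \<le> Sd N adj z"
proof -
  have "(norm (z j - z i))\<^sup>2 \<le> (\<Sum>j\<in>nbr N adj i. (norm (z j - z i))\<^sup>2)"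
    using assms by (intro member_le_sum) (auto simp: nbr_def)
  also have "\<dots> \<le> Sd N adj z" unfolding Sd_def using assms
    by (intro member_le_sum[of _ "{..<N}"] sum_nonneg) auto
  finally show ?thesis .
qed

lemma pair_bound:
  assumes "(\<lambda>a b. a < N \<and> b < N \<and> adj a b)\<^sup>*\<^sup>* i j"
  shows "\<exists>L\<ge>0. \<forall>z::nat\<Rightarrow>real^'n. norm (z i - z j) \<le> L * sqrt (Sd N adj z)"
  using assms
proof (induction rule: rtranclp_induct)
  case base
  then show ?case by (intro exI[of _ 0]) auto
next
  case (step j k)
  then obtain L where L: "L \<ge> 0" "\<And>z::nat\<Rightarrow>real^'n. norm (z i - z j) \<le> L * sqrt (Sd N adj z)" by blast
  have "norm (z i - z k) \<le> (L + 1) * sqrt (Sd N adj z)" for z :: "nat\<Rightarrow>real^'n"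
  proof -
    have "norm (z j - z k) = sqrt ((norm (z k - z j))\<^sup>2)" by (simp add: norm_minus_commute)
    also have "\<dots> \<le> sqrt (Sd N adj z)" using step(2) by (intro real_sqrt_le_mono Sd_term) auto
    finally have "norm (z j - z k) \<le> sqrt (Sd N adj z)" .
    moreover have "norm (z i - z k) \<le> norm (z i - z j) + norm (z j - z k)"
    proof -
      have "z i - z k = (z i - z j) + (z j - z k)" by simp
      thus ?thesis by (metis norm_triangle_ineq)
    qed
    ultimately show ?thesis using L(2)[of z] by (simp add: algebra_simps)
  qed
  then show ?case using L(1) by (intro exI[of _ "L + 1"]) auto
qed

lemma conn_bound:
  assumes "graph_connected N adj"
  shows "\<exists>L\<ge>0. \<forall>z::nat\<Rightarrow>real^'n. \<forall>i<N. \<forall>j<N. norm (z i - z j) \<le> L * sqrt (Sd N adj z)"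
proof -
  have "\<forall>p\<in>{..<N} \<times> {..<N}. \<exists>L\<ge>0. \<forall>z::nat\<Rightarrow>real^'n. norm (z (fst p) - z (snd p)) \<le> L * sqrt (Sd N adj z)"
    using assms unfolding graph_connected_def by (auto intro!: pair_bound)
  from bchoice[OF this] obtain Lf where Lf0: "\<forall>p\<in>{..<N} \<times> {..<N}. Lf p \<ge> 0 \<and>
     (\<forall>z::nat\<Rightarrow>real^'n. norm (z (fst p) - z (snd p)) \<le> Lf p * sqrt (Sd N adj z))"
    by blast
  hence Lf: "\<And>p. p \<in> {..<N} \<times> {..<N} \<Longrightarrow> Lf p \<ge> 0 \<and>
     (\<forall>z::nat\<Rightarrow>real^'n. norm (z (fst p) - z (snd p)) \<le> Lf p * sqrt (Sd N adj z))" by blast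
  define L where "L = (\<Sum>p\<in>{..<N} \<times> {..<N}. Lf p)"
  have "L \<ge> 0" unfolding L_def using Lf by (intro sum_nonneg) auto
  moreover have "norm (z i - z j) \<le> L * sqrt (Sd N adj z)" if "i < N" "j < N" for z :: "nat\<Rightarrow>real^'n" and i j
  proof -
    have "norm (z i - z j) \<le> Lf (i, j) * sqrt (Sd N adj z)" using Lf[of "(i,j)"] that by auto
    also have "\<dots> \<le> L * sqrt (Sd N adj z)" unfolding L_def using that Lf
      by (intro mult_right_mono member_le_sum) (auto simp: Sd_nonneg)
    finally show ?thesis .
  qed
  ultimately show ?thesis by blast
qed

lemma sum_nbr_swap:
  assumes sym: "\<forall>i<N. \<forall>j<N. adj i j = adj j i"
  shows "(\<Sum>i<N. \<Sum>j\<in>nbr N adj i. f i j) = (\<Sum>i<N. \<Sum>j\<in>nbr N adj i. (f j i :: real))"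
proof -
  have e: "(\<Sum>j\<in>nbr N adj i. g j) = (\<Sum>j<N. if adj i j then g j else 0)" for i and g :: "nat \<Rightarrow> real"
  proof -
    have "nbr N adj i = {j \<in> {..<N}. adj i j}" unfolding nbr_def by auto
    thus ?thesis by (simp only: sum.inter_filter[OF finite_lessThan])
  qed
  have "(\<Sum>i<N. \<Sum>j\<in>nbr N adj i. f i j) = (\<Sum>i<N. \<Sum>j<N. if adj i j then f i j else 0)"
    by (simp add: e)
  also have "\<dots> = (\<Sum>j<N. \<Sum>i<N. if adj i j then f i j else 0)" by (rule sum.swap)
  also have "\<dots> = (\<Sum>j<N. \<Sum>i<N. if adj j i then f i j else 0)"
    using sym by (intro sum.cong refl) auto
  also have "\<dots> = (\<Sum>i<N. \<Sum>j\<in>nbr N adj i. f j i)" by (simp add: e)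
  finally show ?thesis .
qed

lemma sum_nbr_swap_vec:
  assumes sym: "\<forall>i<N. \<forall>j<N. adj i j = adj j i"
  shows "(\<Sum>i<N. \<Sum>j\<in>nbr N adj i. f i j) = (\<Sum>i<N. \<Sum>j\<in>nbr N adj i. (f j i :: real^'n))"
proof -
  have e: "(\<Sum>j\<in>nbr N adj i. g j) = (\<Sum>j<N. if adj i j then g j else 0)" for i and g :: "nat \<Rightarrow> real^'n"
  proof -
    have "nbr N adj i = {j \<in> {..<N}. adj i j}" unfolding nbr_def by auto
    thus ?thesis by (simp only: sum.inter_filter[OF finite_lessThan])
  qed
  have "(\<Sum>i<N. \<Sum>j\<in>nbr N adj i. f i j) = (\<Sum>i<N. \<Sum>j<N. if adj i j then f i j else 0)"
    by (simp add: e)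
  also have "\<dots> = (\<Sum>j<N. \<Sum>i<N. if adj i j then f i j else 0)" by (rule sum.swap)
  also have "\<dots> = (\<Sum>j<N. \<Sum>i<N. if adj j i then f i j else 0)"
    using sym by (intro sum.cong refl) auto
  also have "\<dots> = (\<Sum>i<N. \<Sum>j\<in>nbr N adj i. f j i)" by (simp add: e)
  finally show ?thesis .
qed

lemma lap_sum_zero:
  assumes sym: "\<forall>i<N. \<forall>j<N. adj i j = adj j i"
  shows "(\<Sum>i<N. \<Sum>j\<in>nbr N adj i. (x j - x i :: real^'n)) = 0"
proof -
  define X where "X = (\<Sum>i<N. \<Sum>j\<in>nbr N adj i. (x j - x i :: real^'n))"
  have "X = (\<Sum>i<N. \<Sum>j\<in>nbr N adj i. (x i - x j))"
    unfolding X_def by (rule sum_nbr_swap_vec[OF sym])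
  also have "\<dots> = (\<Sum>i<N. \<Sum>j\<in>nbr N adj i. - (x j - x i))" by simp
  also have "\<dots> = - X" unfolding X_def by (simp only: sum_negf)
  finally have X: "X = - X" .
  have "2 *\<^sub>R X = X + X" by (rule scaleR_2)
  also have "\<dots> = - X + X" using X by (rule arg_cong)
  also have "\<dots> = 0" by simp
  finally have "2 *\<^sub>R X = 0" .
  hence "X = 0" by simp
  thus ?thesis unfolding X_def .
qed

lemma sqrt_one_minus: "0 \<le> y \<Longrightarrow> y \<le> 1 \<Longrightarrow> sqrt (1 - y) \<le> 1 - y / 2"
proof -
  assume y: "0 \<le> y" "y \<le> 1"
  have "sqrt (1 - y) \<le> sqrt ((1 - y/2)^2)" using y by (intro real_sqrt_le_mono) (simp add: power2_eq_square algebra_simps)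
  also have "\<dots> = 1 - y/2" using y by simp
  finally show ?thesis .
qed

lemma norm_add_sq: "(norm (x + c *\<^sub>R y))\<^sup>2 = (norm x)\<^sup>2 + 2 * c * (x \<bullet> y) + c^2 * (norm y)\<^sup>2"
  for x y :: "'a::real_inner"
  by (simp only: power2_norm_eq_inner) (simp add: inner_add_left inner_add_right inner_commute algebra_simps power2_eq_square)

lemma lap_contract:
  assumes sym: "\<forall>i<N. \<forall>j<N. adj i j = adj j i" and conn: "graph_connected N adj" and N: "0 < N"
  shows "\<exists>\<kappa>>0. \<forall>(z::nat\<Rightarrow>real^'n) \<beta>. 0 \<le> \<beta> \<longrightarrow> \<beta> * N \<le> 1/2 \<longrightarrow> (\<Sum>i<N. z i) = 0 \<longrightarrow>
     L2_set (\<lambda>i. norm (z i + \<beta> *\<^sub>R (\<Sum>j\<in>nbr N adj i. z j - z i))) {..<N}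
       \<le> (1 - \<kappa> * \<beta>) * L2_set (\<lambda>i. norm (z i)) {..<N}"
proof -
  obtain L0 where L0: "L0 \<ge> 0" "\<And>z::nat\<Rightarrow>real^'n. \<And>i j. i<N \<Longrightarrow> j<N \<Longrightarrow> norm (z i - z j) \<le> L0 * sqrt (Sd N adj z)"
    using conn_bound[OF conn] by blast
  define L where "L = L0 + 1"
  have L: "L \<ge> 1" "\<And>z::nat\<Rightarrow>real^'n. \<And>i j. i<N \<Longrightarrow> j<N \<Longrightarrow> norm (z i - z j) \<le> L * sqrt (Sd N adj z)"
  proof -
    show "L \<ge> 1" using L0 by (simp add: L_def)
    fix z :: "nat\<Rightarrow>real^'n" and i j assume "i<N" "j<N"
    hence "norm (z i - z j) \<le> L0 * sqrt (Sd N adj z)" by (rule L0(2))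
    also have "\<dots> \<le> L * sqrt (Sd N adj z)" unfolding L_def by (intro mult_right_mono) (auto simp: Sd_nonneg)
    finally show "norm (z i - z j) \<le> L * sqrt (Sd N adj z)" .
  qed
  define \<kappa> where "\<kappa> = 1 / (4 * real N * L^2)"
  have kpos: "\<kappa> > 0" unfolding \<kappa>_def using N L by simp
  have main: "L2_set (\<lambda>i. norm (z i + \<beta> *\<^sub>R (\<Sum>j\<in>nbr N adj i. z j - z i))) {..<N}
       \<le> (1 - \<kappa> * \<beta>) * L2_set (\<lambda>i. norm (z i)) {..<N}"
    if b: "0 \<le> \<beta>" "\<beta> * N \<le> 1/2" and z0: "(\<Sum>i<N. z i) = 0" for z :: "nat\<Rightarrow>real^'n" and \<beta> :: real
  proof -
    define S where "S = Sd N adj z"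
    define W where "W = (\<Sum>i<N. (norm (z i))\<^sup>2)"
    define D where "D i = (\<Sum>j\<in>nbr N adj i. z j - z i)" for i
    have S0: "S \<ge> 0" unfolding S_def by (rule Sd_nonneg)
    have zi: "norm (z i) \<le> L * sqrt S" if "i < N" for i
    proof -
      have c: "(\<Sum>j<N. z i) = real N *\<^sub>R z i" by (simp only: sum_constant_scaleR card_lessThan)
      have "(\<Sum>j<N. z i - z j) = real N *\<^sub>R z i" using z0 by (simp only: sum_subtractf c) simp
      hence "z i = (1 / real N) *\<^sub>R (\<Sum>j<N. z i - z j)" using N by simp
      hence "norm (z i) = norm ((1 / real N) *\<^sub>R (\<Sum>j<N. z i - z j))" by (rule arg_cong)
      also have "\<dots> = (1 / real N) * norm (\<Sum>j<N. z i - z j)" by simp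
      finally have "norm (z i) = (1 / real N) * norm (\<Sum>j<N. z i - z j)" .
      also have "\<dots> \<le> (1 / real N) * (\<Sum>j<N. norm (z i - z j))" by (intro mult_left_mono norm_sum) auto
      also have "\<dots> \<le> (1 / real N) * (\<Sum>j<N. L * sqrt S)"
        unfolding S_def using that by (intro mult_left_mono sum_mono L(2)) auto
      also have "\<dots> = L * sqrt S" using N by simp
      finally show ?thesis .
    qed
    have WS: "W \<le> real N * L^2 * S"
    proof -
      have "W \<le> (\<Sum>i<N. (L * sqrt S)^2)" unfolding W_def
        using zi by (intro sum_mono power_mono) auto
      also have "\<dots> = real N * L^2 * S" using S0 by (simp add: power_mult_distrib)
      finally show ?thesis .
    qed
    have cross: "(\<Sum>i<N. z i \<bullet> D i) = - S / 2"
    proof -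
      have "(\<Sum>i<N. z i \<bullet> D i) = (\<Sum>i<N. \<Sum>j\<in>nbr N adj i. z i \<bullet> (z j - z i))"
        unfolding D_def by (simp add: inner_sum_right)
      moreover have "(\<Sum>i<N. \<Sum>j\<in>nbr N adj i. z i \<bullet> (z j - z i)) = (\<Sum>i<N. \<Sum>j\<in>nbr N adj i. z j \<bullet> (z i - z j))"
        by (rule sum_nbr_swap[OF sym])
      moreover have "(\<Sum>i<N. \<Sum>j\<in>nbr N adj i. z i \<bullet> (z j - z i)) + (\<Sum>i<N. \<Sum>j\<in>nbr N adj i. z j \<bullet> (z i - z j)) = - S"
      proof -
        have "(\<Sum>i<N. \<Sum>j\<in>nbr N adj i. z i \<bullet> (z j - z i)) + (\<Sum>i<N. \<Sum>j\<in>nbr N adj i. z j \<bullet> (z i - z j))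
           = (\<Sum>i<N. \<Sum>j\<in>nbr N adj i. z i \<bullet> (z j - z i) + z j \<bullet> (z i - z j))"
          by (simp add: sum.distrib)
        also have "\<dots> = (\<Sum>i<N. \<Sum>j\<in>nbr N adj i. - (norm (z j - z i))\<^sup>2)"
          by (intro sum.cong refl) (simp add: power2_norm_eq_inner inner_diff_left inner_diff_right inner_commute)
        also have "\<dots> = - S" unfolding S_def Sd_def by (simp add: sum_negf)
        finally show ?thesis .
      qed
      ultimately show ?thesis by simp
    qed
    have Dsq: "(norm (D i))\<^sup>2 \<le> real N * (\<Sum>j\<in>nbr N adj i. (norm (z j - z i))\<^sup>2)" for i
    proof -
      have "norm (D i) \<le> (\<Sum>j\<in>nbr N adj i. norm (z j - z i))" unfolding D_def by (rule norm_sum)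
      hence "(norm (D i))\<^sup>2 \<le> (\<Sum>j\<in>nbr N adj i. norm (z j - z i))\<^sup>2" by (intro power_mono) auto
      also have "\<dots> \<le> (\<Sum>j\<in>nbr N adj i. (norm (z j - z i))\<^sup>2) * card (nbr N adj i)"
        by (rule sum_squared_le_sum_of_squares)
      also have "\<dots> \<le> (\<Sum>j\<in>nbr N adj i. (norm (z j - z i))\<^sup>2) * real N"
      proof -
        have "card (nbr N adj i) \<le> N" using card_mono[OF _ nbr_sub] by fastforce
        thus ?thesis by (intro mult_left_mono) (auto intro: sum_nonneg)
      qed
      finally show ?thesis by (simp add: mult.commute)
    qed
    define Y where "Y = (\<Sum>i<N. (norm (z i + \<beta> *\<^sub>R D i))\<^sup>2)"
    have "Y = (\<Sum>i<N. (norm (z i))\<^sup>2 + 2 * \<beta> * (z i \<bullet> D i) + \<beta>^2 * (norm (D i))\<^sup>2)"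
      unfolding Y_def
      by (intro sum.cong refl) (rule norm_add_sq)
    also have "\<dots> = W + 2 * \<beta> * (\<Sum>i<N. z i \<bullet> D i) + \<beta>^2 * (\<Sum>i<N. (norm (D i))\<^sup>2)"
      unfolding W_def by (simp add: sum.distrib sum_distrib_left)
    also have "\<dots> \<le> W - \<beta> * S + \<beta>^2 * (real N * S)"
    proof -
      have "(\<Sum>i<N. (norm (D i))\<^sup>2) \<le> (\<Sum>i<N. real N * (\<Sum>j\<in>nbr N adj i. (norm (z j - z i))\<^sup>2))"
        by (intro sum_mono Dsq)
      also have "\<dots> = real N * S" unfolding S_def Sd_def by (simp add: sum_distrib_left)
      finally have "\<beta>^2 * (\<Sum>i<N. (norm (D i))\<^sup>2) \<le> \<beta>^2 * (real N * S)" by (intro mult_left_mono) auto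
      thus ?thesis unfolding cross by simp
    qed
    also have "\<dots> \<le> W - \<beta> * S / 2"
    proof -
      have "\<beta>^2 * (real N * S) = (\<beta> * real N) * (\<beta> * S)" by (simp add: power2_eq_square algebra_simps)
      also have "\<dots> \<le> (1/2) * (\<beta> * S)" using b S0 by (intro mult_right_mono) auto
      finally show ?thesis by simp
    qed
    also have "\<dots> \<le> W - \<beta> * (W / (real N * L^2)) / 2"
    proof -
      have "W / (real N * L^2) \<le> S" using WS N L by (simp add: divide_le_eq mult.commute)
      hence "\<beta> * (W / (real N * L^2)) \<le> \<beta> * S" by (rule mult_left_mono) (use b in auto)
      thus ?thesis by simp
    qed
    also have "\<dots> = W * (1 - 2 * \<kappa> * \<beta>)" unfolding \<kappa>_def using N L by (simp add: field_simps)
    finally have YW: "Y \<le> W * (1 - 2 * \<kappa> * \<beta>)" .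
    have kb: "2 * \<kappa> * \<beta> \<le> 1"
    proof -
      have N1: "real N \<ge> 1" using N by simp
      have "\<beta> * 1 \<le> \<beta> * real N" using b N1 by (intro mult_left_mono) auto
      hence "\<beta> \<le> 1/2" using b by simp
      moreover have "2 * \<kappa> \<le> 1/2"
      proof -
        have "1 \<le> L^2" using L by simp
        hence "1 * 1 \<le> real N * L^2" using N1 by (intro mult_mono) auto
        hence "1 \<le> real N * L^2" by simp
        thus ?thesis unfolding \<kappa>_def by (simp add: field_simps)
      qed
      ultimately have "2 * \<kappa> * \<beta> \<le> (1/2) * (1/2)" using b kpos by (intro mult_mono) auto
      thus ?thesis by simp
    qed
    have W0: "W \<ge> 0" unfolding W_def by (intro sum_nonneg) auto
    have "L2_set (\<lambda>i. norm (z i + \<beta> *\<^sub>R D i)) {..<N} = sqrt Y" unfolding Y_def L2_set_def by simp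
    also have "\<dots> \<le> sqrt W * sqrt (1 - 2 * \<kappa> * \<beta>)" using YW by (simp add: real_sqrt_mult[symmetric])
    also have "\<dots> \<le> sqrt W * (1 - \<kappa> * \<beta>)"
      using sqrt_one_minus[of "2 * \<kappa> * \<beta>"] kb kpos b W0 by (intro mult_left_mono) auto
    also have "sqrt W = L2_set (\<lambda>i. norm (z i)) {..<N}" unfolding W_def L2_set_def by simp
    finally show ?thesis unfolding D_def by (simp add: mult.commute)
  qed
  show ?thesis
  proof (intro exI[of _ \<kappa>] conjI allI impI)
    show "\<kappa> > 0" by (rule kpos)
  next
    fix z :: "nat \<Rightarrow> real^'n" and \<beta> :: real
    assume "0 \<le> \<beta>" "\<beta> * real N \<le> 1/2" "(\<Sum>i<N. z i) = 0"
    thus "L2_set (\<lambda>i. norm (z i + \<beta> *\<^sub>R (\<Sum>j\<in>nbr N adj i. z j - z i))) {..<N}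
       \<le> (1 - \<kappa> * \<beta>) * L2_set (\<lambda>i. norm (z i)) {..<N}" by (rule main)
  qed
qed


lemma G_contract:
  fixes G :: "real^'n^'n"
  assumes pd: "\<And>x. lam * (norm x)\<^sup>2 \<le> x \<bullet> (G *v x)" and KG: "\<And>x. norm (G *v x) \<le> KG * norm x"
    and s: "0 \<le> s"
  shows "norm (x - s *\<^sub>R (G *v x)) \<le> (1 - s * lam + s^2 * KG^2 / 2) * norm x"
proof (cases "x = 0")
  case True then show ?thesis by simp
next
  case False
  define y where "y = 1 - 2 * s * lam + s^2 * KG^2"
  have "(norm (x - s *\<^sub>R (G *v x)))\<^sup>2 = (norm x)\<^sup>2 - 2 * s * (x \<bullet> (G *v x)) + s^2 * (norm (G *v x))\<^sup>2"
    by (simp only: power2_norm_eq_inner) (simp add: inner_diff_left inner_diff_right inner_commute algebra_simps power2_eq_square)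
  also have "\<dots> \<le> (norm x)\<^sup>2 - 2 * s * (lam * (norm x)\<^sup>2) + s^2 * (KG * norm x)\<^sup>2"
  proof -
    have "2 * s * (lam * (norm x)\<^sup>2) \<le> 2 * s * (x \<bullet> (G *v x))" using s pd by (intro mult_left_mono) auto
    moreover have "(norm (G *v x))\<^sup>2 \<le> (KG * norm x)\<^sup>2" using KG by (intro power_mono) auto
    hence "s^2 * (norm (G *v x))\<^sup>2 \<le> s^2 * (KG * norm x)\<^sup>2" by (intro mult_left_mono) auto
    ultimately show ?thesis by linarith
  qed
  also have "\<dots> = (norm x)\<^sup>2 * y" unfolding y_def by (simp add: algebra_simps power2_eq_square)
  finally have le: "(norm (x - s *\<^sub>R (G *v x)))\<^sup>2 \<le> (norm x)\<^sup>2 * y" .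
  have nx: "(norm x)\<^sup>2 > 0" using False by simp
  have y0: "y \<ge> 0"
  proof (rule ccontr)
    assume "\<not> y \<ge> 0"
    hence "(norm x)\<^sup>2 * y < 0" using nx by (simp add: mult_pos_neg)
    thus False using le by (smt (verit) zero_le_power2)
  qed
  have "norm (x - s *\<^sub>R (G *v x)) = sqrt ((norm (x - s *\<^sub>R (G *v x)))\<^sup>2)" by simp
  also have "\<dots> \<le> sqrt ((norm x)\<^sup>2 * y)" using le by (rule real_sqrt_le_mono)
  also have "\<dots> = norm x * sqrt y" by (simp add: real_sqrt_mult)
  also have "\<dots> \<le> norm x * ((1 + y) / 2)"
  proof -
    have "(1 - sqrt y)^2 \<ge> 0" by simp
    hence "sqrt y \<le> (1 + y) / 2" using y0 by (simp add: power2_eq_square algebra_simps)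
    thus ?thesis by (intro mult_left_mono) auto
  qed
  also have "(1 + y) / 2 = 1 - s * lam + s^2 * KG^2 / 2" unfolding y_def by (simp add: field_simps)
  finally show ?thesis by (simp add: mult.commute)
qed

lemma q_powr_mono: "e1 \<le> e2 \<Longrightarrow> (real t + 1) powr e1 \<le> (real t + 1) powr e2"
  by (intro powr_mono) auto


lemma norm4: "norm (A - B + C + D) \<le> norm A + norm B + norm C + norm (D::'a::real_normed_vector)"
proof -
  have "norm (A - B + C + D) \<le> norm (A - B + C) + norm D" by (rule norm_triangle_ineq)
  moreover have "norm (A - B + C) \<le> norm (A - B) + norm C" by (rule norm_triangle_ineq)
  moreover have "norm (A - B) \<le> norm A + norm B" by (rule norm_triangle_ineq4)
  ultimately show ?thesis by linarith
qed

lemma norm3: "norm (A - B + C) \<le> norm A + norm B + norm (C::'a::real_normed_vector)"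
proof -
  have "norm (A - B + C) \<le> norm (A - B) + norm C" by (rule norm_triangle_ineq)
  moreover have "norm (A - B) \<le> norm A + norm B" by (rule norm_triangle_ineq4)
  ultimately show ?thesis by linarith
qed

lemma ev_ratio:
  assumes "p2 < p1" "0 \<le> C" "0 < D"
  shows "eventually (\<lambda>t::nat. C * (real t + 1) powr (-p1) \<le> D * (real t + 1) powr (-p2)) sequentially"
proof -
  have "eventually (\<lambda>t::nat. (real t + 1) powr (p2 - p1) \<le> D / (C + 1)) sequentially"
    using assms by (intro ev_q_powr_le) auto
  thus ?thesis
  proof eventually_elim
    case (elim t)
    have "(real t + 1) powr (-p1) = (real t + 1) powr (p2 - p1) * (real t + 1) powr (-p2)"
      by (simp add: powr_add[symmetric])
    hence "C * (real t + 1) powr (-p1) = C * (real t + 1) powr (p2 - p1) * (real t + 1) powr (-p2)" by simp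
    also have "\<dots> \<le> C * (D / (C + 1)) * (real t + 1) powr (-p2)"
      using elim assms by (intro mult_right_mono mult_left_mono) auto
    also have "\<dots> \<le> D * (real t + 1) powr (-p2)"
    proof (intro mult_right_mono)
      have "C * (D / (C + 1)) = D * (C / (C + 1))" by simp
      also have "\<dots> \<le> D * 1" using assms by (intro mult_left_mono) auto
      finally show "C * (D / (C + 1)) \<le> D" by simp
    qed auto
    finally show ?case .
  qed
qed

lemma crude_comb:
  fixes Z W Z' W' al be q1 C qg ep \<kappa> N KA \<mu> cG :: real
  assumes hZ: "Z' \<le> (1 - \<kappa> * be) * Z + 2 * N * (al * (KA * (Z + W) + C * qg) + be * (N * ep))"
    and hW: "W' \<le> (1 - cG * q1) * W + al * (KA * Z) + al * (C * qg) + be * (N * ep)"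
    and Z: "0 \<le> Z" and W: "0 \<le> W"
    and cZ: "(2 * N + \<mu>) * KA * al + (cG / 2) * q1 \<le> \<kappa> * be"
    and cW: "2 * N * KA * al \<le> \<mu> * (cG / 2) * q1"
    and mu: "0 \<le> \<mu>"
  shows "Z' + \<mu> * W' \<le> (1 - (cG / 2) * q1) * (Z + \<mu> * W) + ((2 * N + \<mu>) * (al * (C * qg)) + (2 * N * N + \<mu> * N) * (be * ep))"
proof -
  define R where "R = (2 * N + \<mu>) * (al * (C * qg)) + (2 * N * N + \<mu> * N) * (be * ep)"
  have h3: "\<mu> * W' \<le> \<mu> * ((1 - cG * q1) * W + al * (KA * Z) + al * (C * qg) + be * (N * ep))" using hW mu by (rule mult_left_mono)
  have "Z' + \<mu> * W' \<le> ((1 - \<kappa> * be) * Z + 2 * N * (al * (KA * (Z + W) + C * qg) + be * (N * ep)))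
      + \<mu> * ((1 - cG * q1) * W + al * (KA * Z) + al * (C * qg) + be * (N * ep))" using hZ h3 by (rule add_mono)
  also have "\<dots> = Z * (1 - \<kappa> * be + (2 * N + \<mu>) * KA * al) + W * (2 * N * KA * al + \<mu> * (1 - cG * q1)) + R"
    unfolding R_def by (simp add: algebra_simps)
  also have "\<dots> \<le> Z * (1 - (cG / 2) * q1) + W * (\<mu> * (1 - (cG / 2) * q1)) + R"
  proof -
    have "1 - \<kappa> * be + (2 * N + \<mu>) * KA * al \<le> 1 - (cG / 2) * q1" using cZ by linarith
    hence a: "Z * (1 - \<kappa> * be + (2 * N + \<mu>) * KA * al) \<le> Z * (1 - (cG / 2) * q1)" using Z by (rule mult_left_mono)
    have e: "\<mu> * (1 - (cG / 2) * q1) - (2 * N * KA * al + \<mu> * (1 - cG * q1)) = \<mu> * (cG / 2) * q1 - 2 * N * KA * al"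
      by (simp add: algebra_simps)
    have "2 * N * KA * al + \<mu> * (1 - cG * q1) \<le> \<mu> * (1 - (cG / 2) * q1)" using e cW by linarith
    hence b: "W * (2 * N * KA * al + \<mu> * (1 - cG * q1)) \<le> W * (\<mu> * (1 - (cG / 2) * q1))" using W by (rule mult_left_mono)
    show ?thesis using a b by linarith
  qed
  also have "\<dots> = (1 - (cG / 2) * q1) * (Z + \<mu> * W) + R" by (simp add: algebra_simps)
  finally show ?thesis unfolding R_def .
qed


lemma refine_comb:
  fixes Z W Z' Wb al be C qg ep \<kappa> N KA :: real
  assumes hZ: "Z' \<le> (1 - \<kappa> * be) * Z + 2 * N * (al * (KA * (Z + W) + C * qg) + be * (N * ep))"
    and Z: "0 \<le> Z" and cZ: "2 * N * KA * al \<le> (\<kappa> / 2) * be" and W: "W \<le> Wb"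
    and al: "0 \<le> al" and NK: "0 \<le> N" "0 \<le> KA"
  shows "Z' \<le> (1 - (\<kappa> / 2) * be) * Z + 2 * N * (al * (KA * Wb + C * qg) + be * (N * ep))"
proof -
  have "Z' \<le> (1 - \<kappa> * be + 2 * N * KA * al) * Z + 2 * N * (al * (KA * W + C * qg) + be * (N * ep))"
    using hZ by (simp add: algebra_simps)
  also have "\<dots> \<le> (1 - (\<kappa> / 2) * be) * Z + 2 * N * (al * (KA * Wb + C * qg) + be * (N * ep))"
  proof -
    have "1 - \<kappa> * be + 2 * N * KA * al \<le> 1 - \<kappa> / 2 * be" using cZ by linarith
    hence c1: "(1 - \<kappa> * be + 2 * N * KA * al) * Z \<le> (1 - \<kappa> / 2 * be) * Z" using Z by (rule mult_right_mono)
    have "KA * W \<le> KA * Wb" using W NK by (intro mult_left_mono) auto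
    hence "al * (KA * W + C * qg) \<le> al * (KA * Wb + C * qg)" using al by (intro mult_left_mono) auto
    hence "2 * N * (al * (KA * W + C * qg) + be * (N * ep)) \<le> 2 * N * (al * (KA * Wb + C * qg) + be * (N * ep))"
      using NK by (intro mult_left_mono) auto
    thus ?thesis using c1 by linarith
  qed
  finally show ?thesis .
qed

lemma qmul: "(real t + 1) powr x * (real t + 1) powr y = (real t + 1) powr (x + y)"
  by (simp add: powr_add)

lemma det_main:
  fixes X Xh :: "nat \<Rightarrow> nat \<Rightarrow> real^'n" and U :: "nat \<Rightarrow> real^'n" and nz :: "nat \<Rightarrow> nat \<Rightarrow> real^'n"
    and Am :: "nat \<Rightarrow> real^'n^'n" and \<theta> :: "real^'n" and \<alpha> \<beta> :: "nat \<Rightarrow> real"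
    and lam a b \<tau>1 \<tau>2 \<tau>0 \<rho>0 \<gamma> Cn :: real
  assumes N: "0 < N" and sym: "\<forall>i<N. \<forall>j<N. adj i j = adj j i" and conn: "graph_connected N adj"
    and Gpd: "\<And>x. lam * (norm x)\<^sup>2 \<le> x \<bullet> ((\<Sum>i<N. Am i) *v x)" and lam: "0 < lam"
    and recX: "\<And>t i. i < N \<Longrightarrow> X (Suc t) i = X t i + \<alpha> t *\<^sub>R (Am i *v (\<theta> - X t i) + nz t i)
                     + \<beta> t *\<^sub>R (\<Sum>j\<in>nbr N adj i. Xh t j - X t i)"
    and recU: "\<And>t. U (Suc t) = U t + (\<alpha> t / real N) *\<^sub>R (\<Sum>i<N. Am i *v (\<theta> - U t) + nz t i)"
    and trig: "\<And>t j. j < N \<Longrightarrow> norm (Xh t j - X t j) \<le> (real t + 1) powr (-\<rho>0)"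
    and noise: "eventually (\<lambda>t. \<forall>i<N. norm (nz t i) \<le> Cn * (real t + 1) powr \<gamma>) sequentially"
    and al: "\<And>t. \<alpha> t = a * (real t + 1) powr (-\<tau>1)" and be: "\<And>t. \<beta> t = b * (real t + 1) powr (-\<tau>2)"
    and ab: "0 < a" "0 < b" and taus: "0 < \<tau>2" "\<tau>2 < \<tau>1" "\<tau>1 \<le> 1"
    and gam: "0 \<le> \<gamma>" and t0: "0 \<le> \<tau>0" "\<tau>0 < \<tau>1 - \<tau>2 - \<gamma>" "\<tau>0 < \<rho>0 + \<tau>2 - \<tau>1"
    and t1: "\<tau>1 = 1 \<Longrightarrow> \<tau>0 < a * lam / real N"
  shows "\<forall>i<N. (\<lambda>t. (real t + 1) powr \<tau>0 * norm (X t i - U t)) \<longlonglongrightarrow> 0"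
proof -
  define G where "G = (\<Sum>i<N. Am i)"
  from lap_contract[OF sym conn N] obtain \<kappa> where kpos: "\<kappa> > 0" and lapc0: "\<forall>(z::nat\<Rightarrow>real^'n) (\<beta>::real). 0 \<le> \<beta> \<longrightarrow> \<beta> * N \<le> 1/2 \<longrightarrow> (\<Sum>i<N. z i) = 0 \<longrightarrow>
     L2_set (\<lambda>i. norm (z i + \<beta> *\<^sub>R (\<Sum>j\<in>nbr N adj i. z j - z i))) {..<N}
       \<le> (1 - \<kappa> * \<beta>) * L2_set (\<lambda>i. norm (z i)) {..<N}"
    by (elim exE conjE)
  note lapc = lapc0[rule_format]
  have bnd: "\<exists>K. \<forall>x. norm (M *v x) \<le> K * norm x" for M :: "real^'n^'n"
  proof -
    obtain K where K: "\<And>x. norm (M *v x) \<le> norm x * K"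
      using bounded_linear.pos_bounded[OF matrix_vector_mul_bounded_linear[of M]] by blast
    show ?thesis
    proof (rule exI[of _ K], rule allI)
      fix x show "norm (M *v x) \<le> K * norm x" using K[of x] by (simp add: mult.commute)
    qed
  qed
  have "\<forall>i. \<exists>K. \<forall>x. norm (Am i *v x) \<le> K * norm x" using bnd by blast
  from choice[OF this] obtain KAf where KAf: "\<And>i x. norm (Am i *v x) \<le> KAf i * norm x" by blast
  define KA where "KA = (\<Sum>i<N. \<bar>KAf i\<bar>)"
  have KA0: "KA \<ge> 0" unfolding KA_def by (intro sum_nonneg) auto
  have KA: "norm (Am i *v x) \<le> KA * norm x" if "i < N" for i x
  proof -
    have "\<bar>KAf i\<bar> \<le> KA" unfolding KA_def using that
      by (intro member_le_sum) auto
    hence "KAf i \<le> KA" by simp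
    hence "KAf i * norm x \<le> KA * norm x" by (intro mult_right_mono) auto
    thus ?thesis using KAf[of i x] by linarith
  qed
  obtain KG where KG: "\<And>x. norm (G *v x) \<le> KG * norm x" using bnd[of G] by blast
  have Gpd': "\<And>x. lam * (norm x)\<^sup>2 \<le> x \<bullet> (G *v x)" using Gpd unfolding G_def .
  define cc where "cc = a * lam / real N"
  have cc0: "cc > 0" unfolding cc_def using ab lam N by simp
  obtain cG where cG: "0 < cG" "cG < cc" "\<tau>1 = 1 \<Longrightarrow> \<tau>0 < cG"
  proof (cases "\<tau>1 = 1")
    case True
    have "\<tau>0 < cc" using t1[OF True] unfolding cc_def .
    thus ?thesis using t0(1) by (intro that[of "(\<tau>0 + cc) / 2"]) auto
  next
    case False
    thus ?thesis using cc0 by (intro that[of "cc / 2"]) auto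
  qed
  define xb where "xb t = (1 / real N) *\<^sub>R (\<Sum>i<N. X t i)" for t
  define z where "z t i = X t i - xb t" for t i
  define Z where "Z t = L2_set (\<lambda>i. norm (z t i)) {..<N}" for t
  define w where "w t = xb t - \<theta>" for t
  define e where "e t = xb t - U t" for t
  define E where "E t j = Xh t j - X t j" for t j
  define f where "f t i = \<alpha> t *\<^sub>R (Am i *v (\<theta> - X t i) + nz t i) + \<beta> t *\<^sub>R (\<Sum>j\<in>nbr N adj i. E t j)" for t i
  define P where "P t = (\<Sum>i<N. Am i *v z t i)" for t
  define NZ where "NZ t = (\<Sum>i<N. nz t i)" for t
  define Q where "Q t = (\<Sum>i<N. \<Sum>j\<in>nbr N adj i. E t j)" for t
  define F where "F t = (\<Sum>i<N. f t i)" for t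
  define ep where "ep t = (real t + 1) powr (-\<rho>0)" for t
  have Nr: "real N > 0" using N by simp
  have al0: "\<alpha> t \<ge> 0" for t using ab by (simp add: al)
  have be0: "\<beta> t \<ge> 0" for t using ab by (simp add: be)
  have ep0: "ep t \<ge> 0" for t by (simp add: ep_def)
  have stepX: "X (Suc t) i = X t i + \<beta> t *\<^sub>R (\<Sum>j\<in>nbr N adj i. X t j - X t i) + f t i" if "i < N" for t i
  proof -
    have "(\<Sum>j\<in>nbr N adj i. Xh t j - X t i) = (\<Sum>j\<in>nbr N adj i. (X t j - X t i) + E t j)"
      unfolding E_def by (intro sum.cong refl) simp
    also have "\<dots> = (\<Sum>j\<in>nbr N adj i. X t j - X t i) + (\<Sum>j\<in>nbr N adj i. E t j)" by (rule sum.distrib)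
    finally show ?thesis using recX[OF that] unfolding f_def by (simp add: scaleR_add_right algebra_simps)
  qed
  have sumX: "(\<Sum>i<N. X (Suc t) i) = (\<Sum>i<N. X t i) + F t" for t
  proof -
    have "(\<Sum>i<N. X (Suc t) i) = (\<Sum>i<N. X t i + \<beta> t *\<^sub>R (\<Sum>j\<in>nbr N adj i. X t j - X t i) + f t i)"
      using stepX by (intro sum.cong) auto
    also have "\<dots> = (\<Sum>i<N. X t i) + \<beta> t *\<^sub>R (\<Sum>i<N. \<Sum>j\<in>nbr N adj i. X t j - X t i) + F t"
      unfolding F_def by (simp add: sum.distrib scaleR_sum_right)
    also have "(\<Sum>i<N. \<Sum>j\<in>nbr N adj i. X t j - X t i) = 0" by (rule lap_sum_zero[OF sym])
    finally show ?thesis by simp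
  qed
  have xbS: "xb (Suc t) = xb t + (1 / real N) *\<^sub>R F t" for t
    unfolding xb_def sumX by (simp add: scaleR_add_right)
  have zsum: "(\<Sum>i<N. z t i) = 0" for t
  proof -
    have c: "(\<Sum>i<N. xb t) = real N *\<^sub>R xb t" by (simp only: sum_constant_scaleR card_lessThan)
    have "(\<Sum>i<N. z t i) = (\<Sum>i<N. X t i) - real N *\<^sub>R xb t" unfolding z_def sum_subtractf c ..
    also have "real N *\<^sub>R xb t = (\<Sum>i<N. X t i)" unfolding xb_def using Nr by simp
    finally show ?thesis by simp
  qed
  have zS: "z (Suc t) i = (z t i + \<beta> t *\<^sub>R (\<Sum>j\<in>nbr N adj i. z t j - z t i)) + (f t i - (1 / real N) *\<^sub>R F t)"
    if "i < N" for t i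
  proof -
    have sz: "(\<Sum>j\<in>nbr N adj i. z t j - z t i) = (\<Sum>j\<in>nbr N adj i. X t j - X t i)"
      unfolding z_def by (intro sum.cong) auto
    have "z (Suc t) i = X (Suc t) i - xb (Suc t)" by (simp add: z_def)
    also have "\<dots> = X t i + \<beta> t *\<^sub>R (\<Sum>j\<in>nbr N adj i. X t j - X t i) + f t i - (xb t + (1 / real N) *\<^sub>R F t)"
      using stepX[OF that] xbS by simp
    also have "\<dots> = (X t i - xb t) + \<beta> t *\<^sub>R (\<Sum>j\<in>nbr N adj i. z t j - z t i) + (f t i - (1 / real N) *\<^sub>R F t)"
      unfolding sz by (simp add: algebra_simps)
    also have "X t i - xb t = z t i" by (simp add: z_def)
    finally show ?thesis by (simp add: algebra_simps)
  qed
  have zle: "norm (z t i) \<le> Z t" if "i < N" for t i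
    unfolding Z_def using that by (intro member_le_L2_set) auto
  have Z0: "Z t \<ge> 0" for t unfolding Z_def by (rule L2_set_nonneg)
  have Eb: "norm (E t j) \<le> ep t" if "j < N" for t j unfolding E_def ep_def using trig[OF that] .
  have Esum: "norm (\<Sum>j\<in>nbr N adj i. E t j) \<le> real N * ep t" for t i
  proof -
    have "norm (\<Sum>j\<in>nbr N adj i. E t j) \<le> (\<Sum>j\<in>nbr N adj i. norm (E t j))" by (rule norm_sum)
    also have "\<dots> \<le> (\<Sum>j\<in>nbr N adj i. ep t)" using Eb by (intro sum_mono) (auto simp: nbr_def)
    also have "\<dots> = real (card (nbr N adj i)) * ep t" by simp
    also have "\<dots> \<le> real N * ep t"
    proof -
      have "card (nbr N adj i) \<le> N" using card_mono[OF _ nbr_sub] by fastforce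
      thus ?thesis using ep0 by (intro mult_right_mono) auto
    qed
    finally show ?thesis .
  qed
  have Qb: "norm (Q t) \<le> real N * (real N * ep t)" for t
  proof -
    have "norm (Q t) \<le> (\<Sum>i<N. norm (\<Sum>j\<in>nbr N adj i. E t j))" unfolding Q_def by (rule norm_sum)
    also have "\<dots> \<le> (\<Sum>i<N. real N * ep t)" using Esum by (intro sum_mono) auto
    finally show ?thesis by simp
  qed
  have Pb: "norm (P t) \<le> real N * (KA * Z t)" for t
  proof -
    have "norm (P t) \<le> (\<Sum>i<N. norm (Am i *v z t i))" unfolding P_def by (rule norm_sum)
    also have "\<dots> \<le> (\<Sum>i<N. KA * Z t)"
    proof (intro sum_mono)
      fix i assume "i \<in> {..<N}"
      hence i: "i < N" by simp
      have "norm (Am i *v z t i) \<le> KA * norm (z t i)" by (rule KA[OF i])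
      also have "\<dots> \<le> KA * Z t" using zle[OF i] KA0 by (intro mult_left_mono) auto
      finally show "norm (Am i *v z t i) \<le> KA * Z t" .
    qed
    finally show ?thesis by simp
  qed
  have fb: "norm (f t i) \<le> \<alpha> t * (KA * (Z t + norm (w t)) + norm (nz t i)) + \<beta> t * (real N * ep t)"
    if "i < N" for t i
  proof -
    have th: "\<theta> - X t i = - (w t + z t i)" unfolding w_def z_def by simp
    have "norm (Am i *v (\<theta> - X t i)) \<le> KA * norm (\<theta> - X t i)" by (rule KA[OF that])
    also have "\<dots> \<le> KA * (Z t + norm (w t))"
    proof (intro mult_left_mono KA0)
      have "norm (\<theta> - X t i) \<le> norm (w t) + norm (z t i)" unfolding th norm_minus_cancel by (rule norm_triangle_ineq)
      thus "norm (\<theta> - X t i) \<le> Z t + norm (w t)" using zle[OF that, of t] by linarith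
    qed
    finally have a1: "norm (Am i *v (\<theta> - X t i) + nz t i) \<le> KA * (Z t + norm (w t)) + norm (nz t i)"
      by (meson add_mono norm_triangle_le order_refl)
    have "norm (f t i) \<le> norm (\<alpha> t *\<^sub>R (Am i *v (\<theta> - X t i) + nz t i)) + norm (\<beta> t *\<^sub>R (\<Sum>j\<in>nbr N adj i. E t j))"
      unfolding f_def by (rule norm_triangle_ineq)
    also have "\<dots> = \<alpha> t * norm (Am i *v (\<theta> - X t i) + nz t i) + \<beta> t * norm (\<Sum>j\<in>nbr N adj i. E t j)"
      using al0 be0 by simp
    also have "\<dots> \<le> \<alpha> t * (KA * (Z t + norm (w t)) + norm (nz t i)) + \<beta> t * (real N * ep t)"
      using a1 Esum al0 be0 by (intro add_mono mult_left_mono) auto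
    finally show ?thesis .
  qed
  have Gsum: "(\<Sum>i<N. Am i *v v) = G *v v" for v unfolding G_def by (simp add: mv_sum_left)
  have FE: "F t = \<alpha> t *\<^sub>R (G *v \<theta> - P t - G *v xb t + NZ t) + \<beta> t *\<^sub>R Q t" for t
  proof -
    have fi: "f t i = \<alpha> t *\<^sub>R (Am i *v \<theta> - Am i *v z t i - Am i *v xb t + nz t i) + \<beta> t *\<^sub>R (\<Sum>j\<in>nbr N adj i. E t j)" for i
    proof -
      have "X t i = z t i + xb t" by (simp add: z_def)
      hence "Am i *v (\<theta> - X t i) = Am i *v \<theta> - Am i *v z t i - Am i *v xb t"
        by (simp add: matrix_vector_mult_diff_distrib matrix_vector_right_distrib)
      thus ?thesis unfolding f_def by simp
    qed
    have s1: "(\<Sum>i<N. Am i *v \<theta> - Am i *v z t i - Am i *v xb t + nz t i)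
        = (\<Sum>i<N. Am i *v \<theta>) - (\<Sum>i<N. Am i *v z t i) - (\<Sum>i<N. Am i *v xb t) + (\<Sum>i<N. nz t i)"
      by (simp only: sum.distrib sum_subtractf)
    have "F t = (\<Sum>i<N. \<alpha> t *\<^sub>R (Am i *v \<theta> - Am i *v z t i - Am i *v xb t + nz t i)) + (\<Sum>i<N. \<beta> t *\<^sub>R (\<Sum>j\<in>nbr N adj i. E t j))"
      unfolding F_def fi by (rule sum.distrib)
    also have "\<dots> = \<alpha> t *\<^sub>R (\<Sum>i<N. Am i *v \<theta> - Am i *v z t i - Am i *v xb t + nz t i) + \<beta> t *\<^sub>R (\<Sum>i<N. \<Sum>j\<in>nbr N adj i. E t j)"
      by (simp only: scaleR_sum_right)
    also note s1
    finally show ?thesis unfolding Gsum P_def[symmetric] NZ_def[symmetric] Q_def[symmetric] .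
  qed
  have wS: "w (Suc t) = (w t - (\<alpha> t / real N) *\<^sub>R (G *v w t)) - (\<alpha> t / real N) *\<^sub>R P t
      + (\<alpha> t / real N) *\<^sub>R NZ t + (\<beta> t / real N) *\<^sub>R Q t" for t
  proof -
    have gw: "G *v w t = G *v xb t - G *v \<theta>" unfolding w_def by (simp add: matrix_vector_mult_diff_distrib)
    have "w (Suc t) = w t + (1 / real N) *\<^sub>R F t" unfolding w_def xbS by simp
    also have "\<dots> = w t + (1 / real N) *\<^sub>R (\<alpha> t *\<^sub>R (G *v \<theta> - P t - G *v xb t + NZ t) + \<beta> t *\<^sub>R Q t)"
      unfolding FE ..
    finally show ?thesis unfolding gw by (simp add: algebra_simps)
  qed
  have eS: "e (Suc t) = (e t - (\<alpha> t / real N) *\<^sub>R (G *v e t)) - (\<alpha> t / real N) *\<^sub>R P t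
      + (\<beta> t / real N) *\<^sub>R Q t" for t
  proof -
    have US: "U (Suc t) = U t + (\<alpha> t / real N) *\<^sub>R (G *v \<theta> - G *v U t + NZ t)"
    proof -
      have "(\<Sum>i<N. Am i *v (\<theta> - U t) + nz t i) = (\<Sum>i<N. Am i *v (\<theta> - U t)) + NZ t"
        unfolding NZ_def by (rule sum.distrib)
      also have "\<dots> = G *v \<theta> - G *v U t + NZ t" unfolding Gsum by (simp add: matrix_vector_mult_diff_distrib)
      finally show ?thesis using recU[of t] by simp
    qed
    have ge: "G *v e t = G *v xb t - G *v U t" unfolding e_def by (simp add: matrix_vector_mult_diff_distrib)
    have "e (Suc t) = xb t + (1 / real N) *\<^sub>R F t - U (Suc t)" unfolding e_def xbS ..
    also have "\<dots> = xb t + (1 / real N) *\<^sub>R (\<alpha> t *\<^sub>R (G *v \<theta> - P t - G *v xb t + NZ t) + \<beta> t *\<^sub>R Q t)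
        - (U t + (\<alpha> t / real N) *\<^sub>R (G *v \<theta> - G *v U t + NZ t))" unfolding FE US ..
    finally show ?thesis unfolding ge e_def by (simp add: algebra_simps)
  qed
  define gf where "gf t = 1 - (\<alpha> t / real N) * lam + (\<alpha> t / real N)^2 * KG^2 / 2" for t
  have Gc: "norm (v - (\<alpha> t / real N) *\<^sub>R (G *v v)) \<le> gf t * norm v" for t v
    unfolding gf_def by (rule G_contract[OF Gpd' KG]) (use al0 Nr in auto)
  have wN: "norm (w (Suc t)) \<le> gf t * norm (w t) + \<alpha> t * (KA * Z t) + (\<alpha> t / real N) * norm (NZ t)
      + \<beta> t * (real N * ep t)" for t
  proof -
    have s0: "\<alpha> t / real N \<ge> 0" using al0 Nr by simp
    have "norm (w (Suc t)) \<le> norm (w t - (\<alpha> t / real N) *\<^sub>R (G *v w t)) + norm ((\<alpha> t / real N) *\<^sub>R P t)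
      + norm ((\<alpha> t / real N) *\<^sub>R NZ t) + norm ((\<beta> t / real N) *\<^sub>R Q t)" unfolding wS by (rule norm4)
    also have "\<dots> \<le> gf t * norm (w t) + (\<alpha> t / real N) * (real N * (KA * Z t))
      + (\<alpha> t / real N) * norm (NZ t) + (\<beta> t / real N) * (real N * (real N * ep t))"
    proof (intro add_mono)
      show "norm (w t - (\<alpha> t / real N) *\<^sub>R (G *v w t)) \<le> gf t * norm (w t)" by (rule Gc)
      have "norm ((\<alpha> t / real N) *\<^sub>R P t) = (\<alpha> t / real N) * norm (P t)" using s0 by (simp only: norm_scaleR abs_of_nonneg)
      also have "\<dots> \<le> (\<alpha> t / real N) * (real N * (KA * Z t))" using Pb s0 by (rule mult_left_mono)
      finally show "norm ((\<alpha> t / real N) *\<^sub>R P t) \<le> (\<alpha> t / real N) * (real N * (KA * Z t))" .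
      show "norm ((\<alpha> t / real N) *\<^sub>R NZ t) \<le> (\<alpha> t / real N) * norm (NZ t)" using s0 by (simp only: norm_scaleR abs_of_nonneg order_refl)
      have b0: "\<beta> t / real N \<ge> 0" using be0 Nr by simp
      have "norm ((\<beta> t / real N) *\<^sub>R Q t) = (\<beta> t / real N) * norm (Q t)" using b0 by (simp only: norm_scaleR abs_of_nonneg)
      also have "\<dots> \<le> (\<beta> t / real N) * (real N * (real N * ep t))" using Qb b0 by (rule mult_left_mono)
      finally show "norm ((\<beta> t / real N) *\<^sub>R Q t) \<le> (\<beta> t / real N) * (real N * (real N * ep t))" .
    qed
    also have "(\<alpha> t / real N) * (real N * (KA * Z t)) = \<alpha> t * (KA * Z t)" using Nr by simp
    also have "(\<beta> t / real N) * (real N * (real N * ep t)) = \<beta> t * (real N * ep t)" using Nr by simp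
    finally show ?thesis .
  qed
  have eN: "norm (e (Suc t)) \<le> gf t * norm (e t) + \<alpha> t * (KA * Z t) + \<beta> t * (real N * ep t)" for t
  proof -
    have s0: "\<alpha> t / real N \<ge> 0" using al0 Nr by simp
    have "norm (e (Suc t)) \<le> norm (e t - (\<alpha> t / real N) *\<^sub>R (G *v e t)) + norm ((\<alpha> t / real N) *\<^sub>R P t)
      + norm ((\<beta> t / real N) *\<^sub>R Q t)" unfolding eS by (rule norm3)
    also have "\<dots> \<le> gf t * norm (e t) + (\<alpha> t / real N) * (real N * (KA * Z t))
      + (\<beta> t / real N) * (real N * (real N * ep t))"
    proof (intro add_mono)
      show "norm (e t - (\<alpha> t / real N) *\<^sub>R (G *v e t)) \<le> gf t * norm (e t)" by (rule Gc)
      have "norm ((\<alpha> t / real N) *\<^sub>R P t) = (\<alpha> t / real N) * norm (P t)" using s0 by (simp only: norm_scaleR abs_of_nonneg)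
      also have "\<dots> \<le> (\<alpha> t / real N) * (real N * (KA * Z t))" using Pb s0 by (rule mult_left_mono)
      finally show "norm ((\<alpha> t / real N) *\<^sub>R P t) \<le> (\<alpha> t / real N) * (real N * (KA * Z t))" .
      have b0: "\<beta> t / real N \<ge> 0" using be0 Nr by simp
      have "norm ((\<beta> t / real N) *\<^sub>R Q t) = (\<beta> t / real N) * norm (Q t)" using b0 by (simp only: norm_scaleR abs_of_nonneg)
      also have "\<dots> \<le> (\<beta> t / real N) * (real N * (real N * ep t))" using Qb b0 by (rule mult_left_mono)
      finally show "norm ((\<beta> t / real N) *\<^sub>R Q t) \<le> (\<beta> t / real N) * (real N * (real N * ep t))" .
    qed
    also have "(\<alpha> t / real N) * (real N * (KA * Z t)) = \<alpha> t * (KA * Z t)" using Nr by simp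
    also have "(\<beta> t / real N) * (real N * (real N * ep t)) = \<beta> t * (real N * ep t)" using Nr by simp
    finally show ?thesis .
  qed
  have ZN: "Z (Suc t) \<le> (1 - \<kappa> * \<beta> t) * Z t + 2 * (\<Sum>i<N. norm (f t i))" if bN: "\<beta> t * real N \<le> 1/2" for t
  proof -
    define y where "y i = z t i + \<beta> t *\<^sub>R (\<Sum>j\<in>nbr N adj i. z t j - z t i)" for i
    define g where "g i = f t i - (1 / real N) *\<^sub>R F t" for i
    have "Z (Suc t) = L2_set (\<lambda>i. norm (y i + g i)) {..<N}"
      unfolding Z_def y_def g_def by (intro L2_set_cong) (auto simp: zS)
    also have "\<dots> \<le> L2_set (\<lambda>i. norm (y i) + norm (g i)) {..<N}"
      by (intro L2_set_mono norm_triangle_ineq) auto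
    also have "\<dots> \<le> L2_set (\<lambda>i. norm (y i)) {..<N} + L2_set (\<lambda>i. norm (g i)) {..<N}"
      by (rule L2_set_triangle_ineq)
    also have "L2_set (\<lambda>i. norm (y i)) {..<N} \<le> (1 - \<kappa> * \<beta> t) * Z t"
      unfolding y_def Z_def by (rule lapc[OF be0 bN zsum])
    also have "L2_set (\<lambda>i. norm (g i)) {..<N} \<le> (\<Sum>i<N. norm (g i))" by (rule L2_set_le_sum) auto
    also have "\<dots> \<le> (\<Sum>i<N. norm (f t i) + (1 / real N) * norm (F t))"
      unfolding g_def by (intro sum_mono) (use Nr in \<open>auto intro: order.trans[OF norm_triangle_ineq4]\<close>)
    also have "\<dots> = (\<Sum>i<N. norm (f t i)) + norm (F t)" using Nr by (simp add: sum.distrib)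
    also have "norm (F t) \<le> (\<Sum>i<N. norm (f t i))" unfolding F_def by (rule norm_sum)
    finally show ?thesis by linarith
  qed
  define Cp where "Cp = max Cn 0"
  have Cp0: "Cp \<ge> 0" unfolding Cp_def by simp
  have noise': "eventually (\<lambda>t. \<forall>i<N. norm (nz t i) \<le> Cp * (real t + 1) powr \<gamma>) sequentially"
    using noise
  proof eventually_elim
    case (elim t)
    show ?case
    proof (intro allI impI)
      fix i assume i: "i < N"
      have "Cn * (real t + 1) powr \<gamma> \<le> Cp * (real t + 1) powr \<gamma>" by (intro mult_right_mono) (auto simp: Cp_def)
      thus "norm (nz t i) \<le> Cp * (real t + 1) powr \<gamma>" using elim i by (meson order.trans)
    qed
  qed
  have NZb: "eventually (\<lambda>t. norm (NZ t) \<le> real N * (Cp * (real t + 1) powr \<gamma>)) sequentially"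
    using noise'
  proof eventually_elim
    case (elim t)
    have "norm (NZ t) \<le> (\<Sum>i<N. norm (nz t i))" unfolding NZ_def by (rule norm_sum)
    also have "\<dots> \<le> (\<Sum>i<N. Cp * (real t + 1) powr \<gamma>)" using elim by (intro sum_mono) auto
    finally show ?case by simp
  qed
  have SFb: "eventually (\<lambda>t. (\<Sum>i<N. norm (f t i)) \<le> real N * (\<alpha> t * (KA * (Z t + norm (w t)) + Cp * (real t + 1) powr \<gamma>)
      + \<beta> t * (real N * ep t))) sequentially"
    using noise'
  proof eventually_elim
    case (elim t)
    have "(\<Sum>i<N. norm (f t i)) \<le> (\<Sum>i<N. \<alpha> t * (KA * (Z t + norm (w t)) + Cp * (real t + 1) powr \<gamma>)
      + \<beta> t * (real N * ep t))"
    proof (intro sum_mono)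
      fix i assume "i \<in> {..<N}"
      hence i: "i < N" by simp
      have "norm (f t i) \<le> \<alpha> t * (KA * (Z t + norm (w t)) + norm (nz t i)) + \<beta> t * (real N * ep t)" by (rule fb[OF i])
      also have "\<dots> \<le> \<alpha> t * (KA * (Z t + norm (w t)) + Cp * (real t + 1) powr \<gamma>) + \<beta> t * (real N * ep t)"
        using elim i al0[of t] KA0 be0[of t] by (intro add_mono mult_left_mono) auto
      finally show "norm (f t i) \<le> \<alpha> t * (KA * (Z t + norm (w t)) + Cp * (real t + 1) powr \<gamma>) + \<beta> t * (real N * ep t)" .
    qed
    thus ?case by simp
  qed
  have Eb: "eventually (\<lambda>t. \<beta> t * real N \<le> 1/2) sequentially"
    using ev_ratio[of 0 \<tau>2 "b * real N" "1/2"] taus ab Nr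
  proof -
    have "eventually (\<lambda>t::nat. b * real N * (real t + 1) powr (-\<tau>2) \<le> 1/2 * (real t + 1) powr (-0)) sequentially"
      using taus ab Nr by (intro ev_ratio) auto
    thus ?thesis
    proof eventually_elim
      case (elim t)
      have "(real t + 1) powr (-0) = 1" by simp
      thus ?case using elim by (simp add: be algebra_simps)
    qed
  qed
  have Egf: "eventually (\<lambda>t. gf t \<le> 1 - cG * (real t + 1) powr (-\<tau>1)) sequentially"
  proof -
    have "eventually (\<lambda>t::nat. ((a / real N)^2 * KG^2 / 2) * (real t + 1) powr (-(2 * \<tau>1)) \<le> (cc - cG) * (real t + 1) powr (-\<tau>1)) sequentially"
      using taus cG by (intro ev_ratio) auto
    thus ?thesis
    proof eventually_elim
      case (elim t)
      define q1 where "q1 = (real t + 1) powr (-\<tau>1)"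
      have q2: "(real t + 1) powr (-(2 * \<tau>1)) = q1^2" unfolding q1_def power2_eq_square qmul by simp
      have "gf t = 1 - cc * q1 + ((a / real N)^2 * KG^2 / 2) * q1^2"
        unfolding gf_def al cc_def q1_def by (simp add: power2_eq_square algebra_simps)
      also have "\<dots> \<le> 1 - cc * q1 + (cc - cG) * q1" using elim unfolding q2 q1_def by simp
      finally show ?case unfolding q1_def by (simp add: algebra_simps)
    qed
  qed
  define \<mu> where "\<mu> = 4 * real N * a * KA / cG + 1"
  have mu0: "\<mu> > 0" unfolding \<mu>_def using Nr ab KA0 cG by (simp add: add_nonneg_pos)
  have cWc: "2 * real N * KA * \<alpha> t \<le> \<mu> * (cG / 2) * (real t + 1) powr (-\<tau>1)" for t
  proof -
    have "\<mu> * (cG / 2) = 2 * real N * a * KA + cG / 2" unfolding \<mu>_def using cG by (simp add: field_simps)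
    hence "2 * real N * KA * a \<le> \<mu> * (cG / 2)" using cG by simp
    thus ?thesis unfolding al by (simp add: mult.assoc mult_right_mono)
  qed
  have Ecr: "eventually (\<lambda>t. (2 * real N + \<mu>) * KA * \<alpha> t + (cG / 2) * (real t + 1) powr (-\<tau>1) \<le> \<kappa> * \<beta> t) sequentially"
  proof -
    have "eventually (\<lambda>t::nat. ((2 * real N + \<mu>) * KA * a + cG / 2) * (real t + 1) powr (-\<tau>1) \<le> (\<kappa> * b) * (real t + 1) powr (-\<tau>2)) sequentially"
      using taus cG kpos ab mu0 KA0 Nr by (intro ev_ratio) auto
    thus ?thesis by eventually_elim (simp add: al be algebra_simps)
  qed
  have Erf: "eventually (\<lambda>t. 2 * real N * KA * \<alpha> t \<le> (\<kappa> / 2) * \<beta> t) sequentially"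
  proof -
    have "eventually (\<lambda>t::nat. (2 * real N * KA * a) * (real t + 1) powr (-\<tau>1) \<le> (\<kappa> * b / 2) * (real t + 1) powr (-\<tau>2)) sequentially"
      using taus kpos ab KA0 Nr by (intro ev_ratio) auto
    thus ?thesis by eventually_elim (simp add: al be algebra_simps)
  qed
  have hZ: "eventually (\<lambda>t. Z (Suc t) \<le> (1 - \<kappa> * \<beta> t) * Z t + 2 * real N * (\<alpha> t * (KA * (Z t + norm (w t))
      + Cp * (real t + 1) powr \<gamma>) + \<beta> t * (real N * ep t))) sequentially"
    using Eb SFb
  proof eventually_elim
    case (elim t)
    have "Z (Suc t) \<le> (1 - \<kappa> * \<beta> t) * Z t + 2 * (\<Sum>i<N. norm (f t i))" by (rule ZN[OF elim(1)])
    thus ?case using elim(2) by (simp add: algebra_simps)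
  qed
  have hW: "eventually (\<lambda>t. norm (w (Suc t)) \<le> (1 - cG * (real t + 1) powr (-\<tau>1)) * norm (w t) + \<alpha> t * (KA * Z t)
      + \<alpha> t * (Cp * (real t + 1) powr \<gamma>) + \<beta> t * (real N * ep t)) sequentially"
    using Egf NZb
  proof eventually_elim
    case (elim t)
    have a: "gf t * norm (w t) \<le> (1 - cG * (real t + 1) powr (-\<tau>1)) * norm (w t)"
      using elim(1) by (intro mult_right_mono) auto
    have "(\<alpha> t / real N) * norm (NZ t) \<le> (\<alpha> t / real N) * (real N * (Cp * (real t + 1) powr \<gamma>))"
      using elim(2) al0[of t] Nr by (intro mult_left_mono) auto
    also have "\<dots> = \<alpha> t * (Cp * (real t + 1) powr \<gamma>)" using Nr by simp
    finally have b: "(\<alpha> t / real N) * norm (NZ t) \<le> \<alpha> t * (Cp * (real t + 1) powr \<gamma>)" .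
    show ?case using wN[of t] a b by linarith
  qed
  define \<Phi> where "\<Phi> t = Z t + \<mu> * norm (w t)" for t
  define K1 where "K1 = (2 * real N + \<mu>) * (a * Cp) + (2 * real N * real N + \<mu> * real N) * b"
  have K10: "K1 \<ge> 0" unfolding K1_def using Nr mu0 ab Cp0 by simp
  have "\<exists>B. eventually (\<lambda>t. \<Phi> t \<le> B * (real t + 1) powr (-(-\<gamma>))) sequentially"
  proof (rule scalar_rec[of \<tau>1 "cG / 2" "-\<gamma>" K1])
    show "0 < \<tau>1" "\<tau>1 \<le> 1" using taus by auto
    show "0 < cG / 2" using cG by simp
    show "\<tau>1 = 1 \<Longrightarrow> max (- \<gamma>) 0 < cG / 2" using gam cG by simp
    show "0 \<le> K1" by (rule K10)
    show "eventually (\<lambda>t. 0 \<le> \<Phi> t \<and> \<Phi> (Suc t) \<le> (1 - cG / 2 * (real t + 1) powr (-\<tau>1)) * \<Phi> t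
        + K1 * (real t + 1) powr (-(\<tau>1 + -\<gamma>))) sequentially"
      using hZ hW Ecr
    proof eventually_elim
      case (elim t)
      define q1 where "q1 = (real t + 1) powr (-\<tau>1)"
      define qg where "qg = (real t + 1) powr \<gamma>"
      have P0: "0 \<le> \<Phi> t" unfolding \<Phi>_def using Z0 mu0 by (simp add: add_nonneg_nonneg)
      have cc1: "\<Phi> (Suc t) \<le> (1 - (cG / 2) * q1) * (Z t + \<mu> * norm (w t))
          + ((2 * real N + \<mu>) * (\<alpha> t * (Cp * qg)) + (2 * real N * real N + \<mu> * real N) * (\<beta> t * ep t))"
        unfolding \<Phi>_def
        by (rule crude_comb[OF elim(1)[folded qg_def] elim(2)[folded q1_def qg_def] Z0 norm_ge_zero
              elim(3)[folded q1_def] cWc[of t, folded q1_def]]) (use mu0 in auto)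
      have f1: "\<alpha> t * (Cp * qg) = (a * Cp) * (real t + 1) powr (-(\<tau>1 + -\<gamma>))"
        unfolding al qg_def using qmul[of t "-\<tau>1" \<gamma>] by (simp add: algebra_simps)
      have f2: "\<beta> t * ep t \<le> b * (real t + 1) powr (-(\<tau>1 + -\<gamma>))"
      proof -
        have "\<beta> t * ep t = b * (real t + 1) powr (-\<tau>2 + -\<rho>0)" unfolding be ep_def
          using qmul[of t "-\<tau>2" "-\<rho>0"] by (simp add: algebra_simps)
        also have "\<dots> \<le> b * (real t + 1) powr (-(\<tau>1 + -\<gamma>))"
          using ab t0 gam by (intro mult_left_mono q_powr_mono) auto
        finally show ?thesis .
      qed
      have "(2 * real N + \<mu>) * (\<alpha> t * (Cp * qg)) + (2 * real N * real N + \<mu> * real N) * (\<beta> t * ep t)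
          \<le> K1 * (real t + 1) powr (-(\<tau>1 + -\<gamma>))"
      proof -
        have c2: "0 \<le> 2 * real N * real N + \<mu> * real N" using Nr mu0 by simp
        have "(2 * real N * real N + \<mu> * real N) * (\<beta> t * ep t) \<le> (2 * real N * real N + \<mu> * real N) * (b * (real t + 1) powr (-(\<tau>1 + -\<gamma>)))"
          using f2 c2 by (rule mult_left_mono)
        thus ?thesis unfolding f1 K1_def by (simp add: algebra_simps)
      qed
      thus ?case using cc1 P0 unfolding \<Phi>_def q1_def by linarith
    qed
  qed
  then obtain B1 where B1: "eventually (\<lambda>t. \<Phi> t \<le> B1 * (real t + 1) powr \<gamma>) sequentially" by auto
  define B1' where "B1' = max B1 0 / \<mu>"
  have B1'0: "B1' \<ge> 0" unfolding B1'_def using mu0 by simp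
  have Wb: "eventually (\<lambda>t. norm (w t) \<le> B1' * (real t + 1) powr \<gamma>) sequentially"
    using B1
  proof eventually_elim
    case (elim t)
    have "\<mu> * norm (w t) \<le> \<Phi> t" unfolding \<Phi>_def using Z0[of t] by simp
    also have "\<dots> \<le> max B1 0 * (real t + 1) powr \<gamma>" using elim by (smt (verit) mult_right_mono powr_ge_zero)
    finally have "\<mu> * norm (w t) \<le> max B1 0 * (real t + 1) powr \<gamma>" .
    thus ?case unfolding B1'_def using mu0 by (simp add: field_simps)
  qed
  define rz where "rz = min (\<tau>1 - \<tau>2 - \<gamma>) \<rho>0"
  have rz: "\<tau>0 < rz" unfolding rz_def using t0 taus by auto
  define K2 where "K2 = 2 * real N * (a * (KA * B1' + Cp)) + 2 * real N * (b * real N)"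
  have K20: "K2 \<ge> 0" unfolding K2_def using Nr ab KA0 B1'0 Cp0 by simp
  have "\<exists>B. eventually (\<lambda>t. Z t \<le> B * (real t + 1) powr (-rz)) sequentially"
  proof (rule scalar_rec[of \<tau>2 "\<kappa> * b / 2" rz K2])
    show "0 < \<tau>2" "\<tau>2 \<le> 1" using taus by auto
    show "0 < \<kappa> * b / 2" using kpos ab by simp
    show "\<tau>2 = 1 \<Longrightarrow> max rz 0 < \<kappa> * b / 2" using taus by auto
    show "0 \<le> K2" by (rule K20)
    show "eventually (\<lambda>t. 0 \<le> Z t \<and> Z (Suc t) \<le> (1 - \<kappa> * b / 2 * (real t + 1) powr (-\<tau>2)) * Z t
        + K2 * (real t + 1) powr (-(\<tau>2 + rz))) sequentially"
      using hZ Erf Wb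
    proof eventually_elim
      case (elim t)
      define qg where "qg = (real t + 1) powr \<gamma>"
      have r1: "Z (Suc t) \<le> (1 - (\<kappa> / 2) * \<beta> t) * Z t + 2 * real N * (\<alpha> t * (KA * (B1' * qg) + Cp * qg) + \<beta> t * (real N * ep t))"
        by (rule refine_comb[OF elim(1)[folded qg_def] Z0 elim(2) elim(3)[folded qg_def] al0]) (use Nr KA0 in auto)
      have f1: "\<alpha> t * (KA * (B1' * qg) + Cp * qg) \<le> (a * (KA * B1' + Cp)) * (real t + 1) powr (-(\<tau>2 + rz))"
      proof -
        have "\<alpha> t * (KA * (B1' * qg) + Cp * qg) = (a * (KA * B1' + Cp)) * (real t + 1) powr (-\<tau>1 + \<gamma>)"
          unfolding al qg_def using qmul[of t "-\<tau>1" \<gamma>] by (simp add: algebra_simps)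
        also have "\<dots> \<le> (a * (KA * B1' + Cp)) * (real t + 1) powr (-(\<tau>2 + rz))"
          using ab KA0 B1'0 Cp0 by (intro mult_left_mono q_powr_mono) (auto simp: rz_def)
        finally show ?thesis .
      qed
      have f2: "\<beta> t * (real N * ep t) \<le> (b * real N) * (real t + 1) powr (-(\<tau>2 + rz))"
      proof -
        have "\<beta> t * (real N * ep t) = (b * real N) * (real t + 1) powr (-\<tau>2 + -\<rho>0)" unfolding be ep_def
          using qmul[of t "-\<tau>2" "-\<rho>0"] by (simp add: algebra_simps)
        also have "\<dots> \<le> (b * real N) * (real t + 1) powr (-(\<tau>2 + rz))"
          using ab Nr by (intro mult_left_mono q_powr_mono) (auto simp: rz_def)
        finally show ?thesis .
      qed
      have "2 * real N * (\<alpha> t * (KA * (B1' * qg) + Cp * qg) + \<beta> t * (real N * ep t))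
          \<le> 2 * real N * ((a * (KA * B1' + Cp)) * (real t + 1) powr (-(\<tau>2 + rz)) + (b * real N) * (real t + 1) powr (-(\<tau>2 + rz)))"
        using f1 f2 Nr by (intro mult_left_mono add_mono) auto
      also have "\<dots> = K2 * (real t + 1) powr (-(\<tau>2 + rz))" unfolding K2_def by (simp add: algebra_simps)
      finally have "2 * real N * (\<alpha> t * (KA * (B1' * qg) + Cp * qg) + \<beta> t * (real N * ep t)) \<le> K2 * (real t + 1) powr (-(\<tau>2 + rz))" .
      moreover have eqc: "1 - (\<kappa> / 2) * \<beta> t = 1 - \<kappa> * b / 2 * (real t + 1) powr (-\<tau>2)" unfolding be by (simp add: algebra_simps)
      ultimately show ?case using r1[unfolded eqc] Z0[of t] by linarith
    qed
  qed
  then obtain B2 where B2: "eventually (\<lambda>t. Z t \<le> B2 * (real t + 1) powr (-rz)) sequentially" by auto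
  define B2' where "B2' = max B2 0"
  have B2'0: "B2' \<ge> 0" unfolding B2'_def by simp
  have B2': "eventually (\<lambda>t. Z t \<le> B2' * (real t + 1) powr (-rz)) sequentially"
    using B2 by eventually_elim (smt (verit) B2'_def mult_right_mono powr_ge_zero)
  obtain re where re: "\<tau>0 < re" "re \<le> rz" "re \<le> \<rho>0 + \<tau>2 - \<tau>1" "\<tau>1 = 1 \<Longrightarrow> re < cG"
  proof (cases "\<tau>1 = 1")
    case True
    show ?thesis using rz t0 cG(3)[OF True]
      by (intro that[of "min (min rz (\<rho>0 + \<tau>2 - \<tau>1)) ((\<tau>0 + cG) / 2)"]) (auto simp: min_def)
  next
    case False
    show ?thesis using rz t0 False by (intro that[of "min rz (\<rho>0 + \<tau>2 - \<tau>1)"]) auto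
  qed
  define K3 where "K3 = a * KA * B2' + b * real N"
  have K30: "K3 \<ge> 0" unfolding K3_def using ab KA0 B2'0 Nr by simp
  have "\<exists>B. eventually (\<lambda>t. norm (e t) \<le> B * (real t + 1) powr (-re)) sequentially"
  proof (rule scalar_rec[of \<tau>1 cG re K3])
    show "0 < \<tau>1" "\<tau>1 \<le> 1" using taus by auto
    show "0 < cG" using cG by simp
    show "\<tau>1 = 1 \<Longrightarrow> max re 0 < cG" using re cG by auto
    show "0 \<le> K3" by (rule K30)
    show "eventually (\<lambda>t. 0 \<le> norm (e t) \<and> norm (e (Suc t)) \<le> (1 - cG * (real t + 1) powr (-\<tau>1)) * norm (e t)
        + K3 * (real t + 1) powr (-(\<tau>1 + re))) sequentially"
      using Egf B2'
    proof eventually_elim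
      case (elim t)
      have a1: "gf t * norm (e t) \<le> (1 - cG * (real t + 1) powr (-\<tau>1)) * norm (e t)"
        using elim(1) by (intro mult_right_mono) auto
      have a2: "\<alpha> t * (KA * Z t) \<le> (a * KA * B2') * (real t + 1) powr (-(\<tau>1 + re))"
      proof -
        have "\<alpha> t * (KA * Z t) \<le> \<alpha> t * (KA * (B2' * (real t + 1) powr (-rz)))"
          using elim(2) al0[of t] KA0 by (intro mult_left_mono) auto
        also have "\<dots> = (a * KA * B2') * (real t + 1) powr (-\<tau>1 + -rz)" unfolding al
          using qmul[of t "-\<tau>1" "-rz"] by (simp add: algebra_simps)
        also have "\<dots> \<le> (a * KA * B2') * (real t + 1) powr (-(\<tau>1 + re))"
          using ab KA0 B2'0 re by (intro mult_left_mono q_powr_mono) auto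
        finally show ?thesis .
      qed
      have a3: "\<beta> t * (real N * ep t) \<le> (b * real N) * (real t + 1) powr (-(\<tau>1 + re))"
      proof -
        have "\<beta> t * (real N * ep t) = (b * real N) * (real t + 1) powr (-\<tau>2 + -\<rho>0)" unfolding be ep_def
          using qmul[of t "-\<tau>2" "-\<rho>0"] by (simp add: algebra_simps)
        also have "\<dots> \<le> (b * real N) * (real t + 1) powr (-(\<tau>1 + re))"
          using ab Nr re by (intro mult_left_mono q_powr_mono) auto
        finally show ?thesis .
      qed
      have "K3 * (real t + 1) powr (-(\<tau>1 + re)) = (a * KA * B2') * (real t + 1) powr (-(\<tau>1 + re))
          + (b * real N) * (real t + 1) powr (-(\<tau>1 + re))" unfolding K3_def by (simp add: algebra_simps)
      thus ?case using eN[of t] a1 a2 a3 by simp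
    qed
  qed
  then obtain B3 where B3: "eventually (\<lambda>t. norm (e t) \<le> B3 * (real t + 1) powr (-re)) sequentially" by auto
  show ?thesis
  proof (intro allI impI)
    fix i assume i: "i < N"
    have "eventually (\<lambda>t. norm ((real t + 1) powr \<tau>0 * norm (X t i - U t)) \<le> (B2' + max B3 0) * (real t + 1) powr (\<tau>0 - re)) sequentially"
      using B2' B3
    proof eventually_elim
      case (elim t)
      have q0: "(real t + 1) powr \<tau>0 \<ge> 0" by simp
      have "X t i - U t = z t i + e t" unfolding z_def e_def by simp
      hence "norm (X t i - U t) \<le> norm (z t i) + norm (e t)" by (simp add: norm_triangle_ineq)
      also have "\<dots> \<le> Z t + norm (e t)" using zle[OF i, of t] by simp
      also have "\<dots> \<le> B2' * (real t + 1) powr (-rz) + max B3 0 * (real t + 1) powr (-re)"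
        using elim by (smt (verit) mult_right_mono powr_ge_zero)
      also have "\<dots> \<le> B2' * (real t + 1) powr (-re) + max B3 0 * (real t + 1) powr (-re)"
        using B2'0 re by (intro add_mono mult_left_mono q_powr_mono) auto
      finally have h: "norm (X t i - U t) \<le> (B2' + max B3 0) * (real t + 1) powr (-re)" by (simp add: algebra_simps)
      have "norm ((real t + 1) powr \<tau>0 * norm (X t i - U t)) = (real t + 1) powr \<tau>0 * norm (X t i - U t)" by simp
      also have "\<dots> \<le> (real t + 1) powr \<tau>0 * ((B2' + max B3 0) * (real t + 1) powr (-re))"
        using h q0 by (rule mult_left_mono)
      also have "\<dots> = (B2' + max B3 0) * (real t + 1) powr (\<tau>0 - re)"
        using qmul[of t \<tau>0 "-re"] by (simp add: algebra_simps)
      finally show ?case .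
    qed
    moreover have "((\<lambda>t. (B2' + max B3 0) * (real t + 1) powr (\<tau>0 - re)) \<longlongrightarrow> 0) sequentially"
      using tendsto_mult_left[OF tendsto_q_powr[of "\<tau>0 - re"], of "B2' + max B3 0"] re by simp
    ultimately show "(\<lambda>t. (real t + 1) powr \<tau>0 * norm (X t i - U t)) \<longlonglongrightarrow> 0"
      by (rule Lim_null_comparison)
  qed
qed

lemma summable_q_powr: "1 < s \<Longrightarrow> summable (\<lambda>t::nat. (real t + 1) powr (-s))"
proof -
  assume s: "1 < s"
  have "summable (\<lambda>n::nat. real n powr (-s))" using s by (subst summable_real_powr_iff) auto
  hence "summable (\<lambda>n::nat. real (Suc n) powr (-s))" by (subst summable_Suc_iff)
  thus ?thesis by (simp add: add.commute)
qed

lemma noise_AE: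
  fixes M :: "'a measure" and v :: "nat \<Rightarrow> nat \<Rightarrow> 'a \<Rightarrow> nat \<Rightarrow> real"
  assumes P: "prob_space M"
    and indep: "prob_space.indep_vars M (\<lambda>_. noise_space N m) (\<lambda>t. stacked_noise N m v t) UNIV"
    and ident: "\<forall>t. distr M (noise_space N m) (stacked_noise N m v t) = distr M (noise_space N m) (stacked_noise N m v 0)"
    and eps: "0 < \<epsilon>" and mom: "integrable M (\<lambda>\<omega>. noise_norm N m v 0 \<omega> powr (2 + \<epsilon>))"
    and gam: "1 / (2 + \<epsilon>) < \<gamma>"
  shows "AE \<omega> in M. eventually (\<lambda>t. noise_norm N m v t \<omega> \<le> (real t + 1) powr \<gamma>) sequentially"
proof -
  interpret prob_space M by (rule P)
  define S where "S = noise_space N m"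
  define V where "V t = stacked_noise N m v t" for t
  define g where "g f = sqrt (\<Sum>i<N. \<Sum>l<m i. (f (i, l))\<^sup>2)" for f :: "nat \<times> nat \<Rightarrow> real"
  define p where "p = 2 + \<epsilon>"
  have p0: "p > 0" unfolding p_def using eps by simp
  have Vm: "V t \<in> M \<rightarrow>\<^sub>M S" for t
    using indep unfolding indep_vars_def S_def V_def by auto
  have gm: "g \<in> borel_measurable S"
  proof -
    have "(\<lambda>f. f (i, l)) \<in> borel_measurable S" if "i < N" "l < m i" for i l
      unfolding S_def noise_space_def
      by (rule measurable_component_singleton) (use that in \<open>auto simp: noise_idx_def\<close>)
    hence "(\<lambda>f. \<Sum>i<N. \<Sum>l<m i. (f (i, l))\<^sup>2) \<in> borel_measurable S"
      by (intro borel_measurable_sum borel_measurable_power) auto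
    thus ?thesis unfolding g_def by (rule measurable_compose[OF _ borel_measurable_sqrt])
  qed
  have nn: "noise_norm N m v t \<omega> = g (V t \<omega>)" for t \<omega>
    unfolding noise_norm_def g_def V_def stacked_noise_def noise_idx_def by simp
  have Xm: "(\<lambda>\<omega>. noise_norm N m v t \<omega>) \<in> borel_measurable M" for t
    unfolding nn by (rule measurable_compose[OF Vm gm])
  define c where "c t = (real t + 1) powr \<gamma>" for t :: nat
  have c0: "c t > 0" for t unfolding c_def by simp
  define A where "A t = {\<omega> \<in> space M. c t < noise_norm N m v t \<omega>}" for t
  have Am: "A t \<in> sets M" for t unfolding A_def using Xm[of t] by measurable
  define B where "B t = {f \<in> space S. c t < g f}" for t
  have Bm: "B t \<in> sets S" for t unfolding B_def using gm by measurable
  have AB: "A t = V t -` B t \<inter> space M" for t s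
    unfolding A_def B_def nn using measurable_space[OF Vm[of t]] by auto
  have AB0: "{\<omega> \<in> space M. c t < noise_norm N m v 0 \<omega>} = V 0 -` B t \<inter> space M" for t
    unfolding B_def nn using measurable_space[OF Vm[of 0]] by auto
  have pA: "prob (A t) = prob {\<omega> \<in> space M. c t < noise_norm N m v 0 \<omega>}" for t
  proof -
    have "prob (A t) = measure (distr M S (V t)) (B t)" unfolding AB by (rule measure_distr[OF Vm Bm, symmetric])
    also have "distr M S (V t) = distr M S (V 0)" using ident unfolding S_def V_def by simp
    also have "measure (distr M S (V 0)) (B t) = prob (V 0 -` B t \<inter> space M)" by (rule measure_distr[OF Vm Bm])
    finally show ?thesis unfolding AB0 .
  qed
  define Mom where "Mom = (\<integral>\<omega>. noise_norm N m v 0 \<omega> powr p \<partial>M)"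
  have pA_le: "prob (A t) \<le> Mom * (real t + 1) powr (-(\<gamma> * p))" for t
  proof -
    have sub: "{\<omega> \<in> space M. c t < noise_norm N m v 0 \<omega>} \<subseteq> {\<omega> \<in> space M. c t powr p \<le> noise_norm N m v 0 \<omega> powr p}"
      using c0[of t] p0 by (auto intro: powr_mono2)
    have "prob (A t) \<le> prob {\<omega> \<in> space M. c t powr p \<le> noise_norm N m v 0 \<omega> powr p}"
      unfolding pA by (rule finite_measure_mono[OF sub]) (use Xm[of 0] in measurable)
    also have "\<dots> \<le> Mom / c t powr p" unfolding Mom_def
      by (rule integral_Markov_inequality_measure[OF mom[folded p_def] sets.top]) (use c0[of t] in auto)
    also have "c t powr p = (real t + 1) powr (\<gamma> * p)" unfolding c_def by (simp add: powr_powr)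
    also have "Mom / (real t + 1) powr (\<gamma> * p) = Mom * (real t + 1) powr (-(\<gamma> * p))"
      by (simp add: powr_minus divide_inverse)
    finally show ?thesis .
  qed
  have "\<gamma> * p > 1" using gam p0 unfolding p_def by (simp add: field_simps)
  hence "summable (\<lambda>t. Mom * (real t + 1) powr (-(\<gamma> * p)))"
    by (intro summable_mult summable_q_powr)
  hence sA: "summable (\<lambda>t. prob (A t))"
    by (rule summable_comparison_test'[where N=0]) (use pA_le in auto)
  have "AE \<omega> in M. eventually (\<lambda>t. \<omega> \<in> space M - A t) sequentially"
    by (rule borel_cantelli_AE1[OF Am _ sA]) (simp add: emeasure_eq_measure)
  thus ?thesis
  proof (rule AE_mp[OF _ AE_I2], intro impI)
    fix \<omega> assume "\<omega> \<in> space M" "eventually (\<lambda>t. \<omega> \<in> space M - A t) sequentially"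
    thus "eventually (\<lambda>t. noise_norm N m v t \<omega> \<le> (real t + 1) powr \<gamma>) sequentially"
    proof (elim eventually_mono)
      fix t assume "\<omega> \<in> space M - A t"
      thus "noise_norm N m v t \<omega> \<le> (real t + 1) powr \<gamma>" using \<open>\<omega> \<in> space M\<close> unfolding A_def c_def by auto
    qed
  qed
qed


definition Amat :: "(nat \<Rightarrow> nat \<Rightarrow> 'n::finite \<Rightarrow> real) \<Rightarrow> (nat \<Rightarrow> nat) \<Rightarrow> nat \<Rightarrow> real^'n^'n" where
  "Amat H m i = (\<chi> j k. \<Sum>l<m i. H i l j * H i l k)"

lemma amat_mv: "(Amat H m i *v y) $ j = (\<Sum>l<m i. H i l j * Hmul H i y l)"
proof -
  have "(Amat H m i *v y) $ j = (\<Sum>k\<in>UNIV. (\<Sum>l<m i. H i l j * H i l k) * y $ k)"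
    by (simp add: matrix_vector_mult_def Amat_def)
  also have "\<dots> = (\<Sum>k\<in>UNIV. \<Sum>l<m i. H i l j * (H i l k * y $ k))"
    by (simp add: sum_distrib_right mult.assoc)
  also have "\<dots> = (\<Sum>l<m i. \<Sum>k\<in>UNIV. H i l j * (H i l k * y $ k))" by (rule sum.swap)
  also have "\<dots> = (\<Sum>l<m i. H i l j * Hmul H i y l)" by (simp add: Hmul_def sum_distrib_left)
  finally show ?thesis .
qed

lemma gram_sum: "gram N H m = (\<Sum>i<N. Amat H m i)"
  by (simp add: vec_eq_iff gram_def Amat_def)

lemma Hmul_diff: "Hmul H i (x - y) l = Hmul H i x l - Hmul H i y l"
  by (simp add: Hmul_def algebra_simps sum_subtractf)

lemma innov_eq: "innov H m v \<theta> i t \<omega> z = Amat H m i *v (\<theta> - z) + HTmul H m i (v i t \<omega>)"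
proof -
  have "innov H m v \<theta> i t \<omega> z $ j = (Amat H m i *v (\<theta> - z) + HTmul H m i (v i t \<omega>)) $ j" for j
  proof -
    have "innov H m v \<theta> i t \<omega> z $ j = (\<Sum>l<m i. H i l j * (Hmul H i \<theta> l + v i t \<omega> l - Hmul H i z l))"
      by (simp add: innov_def HTmul_def meas_def)
    also have "\<dots> = (\<Sum>l<m i. H i l j * Hmul H i (\<theta> - z) l + H i l j * v i t \<omega> l)"
      by (intro sum.cong refl) (simp add: Hmul_diff algebra_simps)
    also have "\<dots> = (\<Sum>l<m i. H i l j * Hmul H i (\<theta> - z) l) + (\<Sum>l<m i. H i l j * v i t \<omega> l)"
      by (rule sum.distrib)
    also have "\<dots> = (Amat H m i *v (\<theta> - z) + HTmul H m i (v i t \<omega>)) $ j"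
      by (simp add: amat_mv HTmul_def)
    finally show ?thesis .
  qed
  thus ?thesis by (simp add: vec_eq_iff)
qed

lemma quad_i: "x \<bullet> (Amat H m i *v x) = (\<Sum>l<m i. (Hmul H i x l)\<^sup>2)"
proof -
  have "x \<bullet> (Amat H m i *v x) = (\<Sum>j\<in>UNIV. x $ j * (\<Sum>l<m i. H i l j * Hmul H i x l))"
    by (simp add: inner_vec_def amat_mv)
  also have "\<dots> = (\<Sum>j\<in>UNIV. \<Sum>l<m i. H i l j * x $ j * Hmul H i x l)"
    by (simp add: sum_distrib_left mult_ac)
  also have "\<dots> = (\<Sum>l<m i. \<Sum>j\<in>UNIV. H i l j * x $ j * Hmul H i x l)" by (rule sum.swap)
  also have "\<dots> = (\<Sum>l<m i. (Hmul H i x l)\<^sup>2)"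
    by (simp add: Hmul_def sum_distrib_right power2_eq_square)
  finally show ?thesis .
qed

lemma gram_mv: "gram N H m *v x = (\<Sum>i<N. Amat H m i *v x)"
  unfolding gram_sum by (simp add: mv_sum_left)

lemma gram_quad: "x \<bullet> (gram N H m *v x) = (\<Sum>i<N. \<Sum>l<m i. (Hmul H i x l)\<^sup>2)"
  unfolding gram_mv by (simp add: inner_sum_right quad_i)

lemma gram_sym: "transpose (gram N H m) = gram N H m"
  by (simp add: vec_eq_iff transpose_def gram_def mult.commute)

lemma gram_pd:
  assumes "rank (gram N H m) = CARD('n)" and "x \<noteq> 0"
  shows "0 < x \<bullet> (gram N H m *v (x::real^'n))"
proof (rule ccontr)
  assume "\<not> 0 < x \<bullet> (gram N H m *v x)"
  moreover have "0 \<le> x \<bullet> (gram N H m *v x)" unfolding gram_quad by (intro sum_nonneg) auto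
  ultimately have "(\<Sum>i<N. \<Sum>l<m i. (Hmul H i x l)\<^sup>2) = 0" unfolding gram_quad by linarith
  hence z: "\<forall>i\<in>{..<N}. (\<Sum>l<m i. (Hmul H i x l)\<^sup>2) = 0"
    by (subst (asm) sum_nonneg_eq_0_iff) (auto intro: sum_nonneg)
  have "Hmul H i x l = 0" if "i < N" "l < m i" for i l
  proof -
    have "\<forall>l\<in>{..<m i}. (Hmul H i x l)\<^sup>2 = 0" using z that by (subst (asm) sum_nonneg_eq_0_iff) auto
    thus ?thesis using that by auto
  qed
  hence "Amat H m i *v x = 0" if "i < N" for i using that by (simp add: vec_eq_iff amat_mv)
  hence "gram N H m *v x = 0" unfolding gram_mv by simp
  hence "gram N H m *v x = gram N H m *v 0" by simp
  moreover have "inj ((*v) (gram N H m))" using assms(1) by (simp add: full_rank_injective)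
  ultimately have "x = 0" by (meson injD)
  thus False using assms(2) by simp
qed

lemma v_le_nn:
  assumes "i < N" "l < m i"
  shows "\<bar>v i t \<omega> l\<bar> \<le> noise_norm N m v t \<omega>"
proof -
  have "(v i t \<omega> l)\<^sup>2 \<le> (\<Sum>l'<m i. (v i t \<omega> l')\<^sup>2)" using assms by (intro member_le_sum) auto
  also have "\<dots> \<le> (\<Sum>i'<N. \<Sum>l'<m i'. (v i' t \<omega> l')\<^sup>2)"
    using assms by (intro member_le_sum[of i "{..<N}" "\<lambda>i'. \<Sum>l'<m i'. (v i' t \<omega> l')\<^sup>2"]) (auto intro!: sum_nonneg)
  finally have "sqrt ((v i t \<omega> l)\<^sup>2) \<le> noise_norm N m v t \<omega>" unfolding noise_norm_def by (rule real_sqrt_le_mono)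
  thus ?thesis by simp
qed

lemma HT_bound:
  assumes i: "i < N"
  shows "norm (HTmul H m i (v i t \<omega>)) \<le> (\<Sum>i'<N. \<Sum>j\<in>UNIV. \<Sum>l<m i'. \<bar>H i' l j\<bar>) * noise_norm N m v t \<omega>"
proof -
  define nn where "nn = noise_norm N m v t \<omega>"
  have nn0: "nn \<ge> 0" unfolding nn_def noise_norm_def by (intro real_sqrt_ge_zero sum_nonneg) auto
  have "norm (HTmul H m i (v i t \<omega>)) \<le> (\<Sum>j\<in>UNIV. \<bar>HTmul H m i (v i t \<omega>) $ j\<bar>)" by (rule norm_le_l1_cart)
  also have "\<dots> \<le> (\<Sum>j\<in>UNIV. \<Sum>l<m i. \<bar>H i l j\<bar> * nn)"
  proof (intro sum_mono)
    fix j :: 'a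
    have "\<bar>HTmul H m i (v i t \<omega>) $ j\<bar> = \<bar>\<Sum>l<m i. H i l j * v i t \<omega> l\<bar>" by (simp add: HTmul_def)
    also have "\<dots> \<le> (\<Sum>l<m i. \<bar>H i l j * v i t \<omega> l\<bar>)" by (rule sum_abs)
    also have "\<dots> \<le> (\<Sum>l<m i. \<bar>H i l j\<bar> * nn)"
    proof (intro sum_mono)
      fix l assume "l \<in> {..<m i}"
      hence "\<bar>v i t \<omega> l\<bar> \<le> nn" unfolding nn_def using v_le_nn[OF i] by auto
      thus "\<bar>H i l j * v i t \<omega> l\<bar> \<le> \<bar>H i l j\<bar> * nn" by (simp add: abs_mult mult_left_mono)
    qed
    finally show "\<bar>HTmul H m i (v i t \<omega>) $ j\<bar> \<le> (\<Sum>l<m i. \<bar>H i l j\<bar> * nn)" .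
  qed
  also have "\<dots> = (\<Sum>j\<in>UNIV. \<Sum>l<m i. \<bar>H i l j\<bar>) * nn" by (simp add: sum_distrib_right)
  also have "\<dots> \<le> (\<Sum>i'<N. \<Sum>j\<in>UNIV. \<Sum>l<m i'. \<bar>H i' l j\<bar>) * nn"
    using i nn0 by (intro mult_right_mono member_le_sum[of i "{..<N}" "\<lambda>i'. \<Sum>j\<in>UNIV. \<Sum>l<m i'. \<bar>H i' l j\<bar>"] sum_nonneg) auto
  finally show ?thesis unfolding nn_def .
qed

lemma et_trig:
  "norm (snd (et_state N adj H m v \<theta> \<alpha> \<beta> \<rho> x0 \<omega> t) j - fst (et_state N adj H m v \<theta> \<alpha> \<beta> \<rho> x0 \<omega> t) j)
     \<le> (real t + 1) powr (- \<rho> j)"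
proof (cases t)
  case 0
  then show ?thesis by simp
next
  case (Suc t')
  define x where "x = fst (et_state N adj H m v \<theta> \<alpha> \<beta> \<rho> x0 \<omega> t')"
  define xh where "xh = snd (et_state N adj H m v \<theta> \<alpha> \<beta> \<rho> x0 \<omega> t')"
  define x' where "x' = (\<lambda>i. x i + \<alpha> t' *\<^sub>R innov H m v \<theta> i t' \<omega> (x i)
                      + \<beta> t' *\<^sub>R (\<Sum>j\<in>{j. j < N \<and> adj i j}. xh j - x i))"
  have st: "et_state N adj H m v \<theta> \<alpha> \<beta> \<rho> x0 \<omega> t = (x', \<lambda>i. if norm (x' i - xh i) > 1 / (real (Suc t') + 1) powr \<rho> i then x' i else xh i)"
    unfolding Suc x'_def x_def xh_def by (simp add: Let_def)
  have thr: "1 / (real (Suc t') + 1) powr \<rho> j = (real t + 1) powr (- \<rho> j)"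
    unfolding Suc by (simp add: powr_minus divide_inverse)
  show ?thesis
  proof (cases "norm (x' j - xh j) > 1 / (real (Suc t') + 1) powr \<rho> j")
    case True
    then show ?thesis unfolding st by simp
  next
    case False
    hence "norm (xh j - x' j) \<le> 1 / (real (Suc t') + 1) powr \<rho> j" by (simp add: norm_minus_commute)
    then show ?thesis unfolding st thr using False by simp
  qed
qed

theorem theorem4:
  fixes M :: "'a measure"
    and N :: nat and m :: "nat \<Rightarrow> nat"
    and H :: "nat \<Rightarrow> nat \<Rightarrow> 'n::finite \<Rightarrow> real"
    and \<theta> :: "real^'n"
    and v :: "nat \<Rightarrow> nat \<Rightarrow> 'a \<Rightarrow> nat \<Rightarrow> real"
    and adj :: "nat \<Rightarrow> nat \<Rightarrow> bool"
    and \<rho> :: "nat \<Rightarrow> real"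
    and x0 :: "nat \<Rightarrow> real^'n" and u0 :: "real^'n"
    and a b \<tau>1 \<tau>2 a_c \<tau>_c \<epsilon>1 \<tau>0 :: real
  assumes P: "prob_space M"
    and N_pos: "0 < N"
    and graph: "undirected_simple N adj"
    and rho_pos: "\<forall>i<N. 0 < \<rho> i"
    and noise_mean: "\<forall>t. \<forall>i<N. \<forall>l<m i. prob_space.expectation M (\<lambda>\<omega>. v i t \<omega> l) = 0"
    and noise_indep: "prob_space.indep_vars M (\<lambda>_. noise_space N m) (\<lambda>t. stacked_noise N m v t) UNIV"
    and noise_ident: "\<forall>t. distr M (noise_space N m) (stacked_noise N m v t)
                          = distr M (noise_space N m) (stacked_noise N m v 0)"
    and conn: "graph_connected N adj"
    and full_rank: "rank (gram N H m) = CARD('n)"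
    and eps_pos: "0 < \<epsilon>1"
    and moment: "\<forall>t. integrable M (\<lambda>\<omega>. noise_norm N m v t \<omega> powr (2 + \<epsilon>1))"
    and ab: "0 < a" "0 < b"
    and taus: "0 < \<tau>2" "\<tau>2 \<le> \<tau>1" "\<tau>1 \<le> 1"
    and tau1_big: "\<tau>1 > max (\<tau>2 + 1 / (2 + \<epsilon>1)) 0.5"
    and cent: "\<tau>_c = \<tau>1" "a_c = a"
    and rho0: "Min (\<rho> ` {..<N}) > \<tau>1 - \<tau>2"
    and tau0: "0 \<le> \<tau>0"
       "\<tau>0 < min (\<tau>1 - \<tau>2 - 1 / (2 + \<epsilon>1)) (Min (\<rho> ` {..<N}) + \<tau>2 - \<tau>1)"
    and tau1_one: "\<tau>1 = 1 \<Longrightarrow> a > real N * \<tau>0 / lambda_min (gram N H m)"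
  shows "\<forall>i<N. AE \<omega> in M.
           ((\<lambda>t. (real t + 1) powr \<tau>0 *
              norm (et_est N adj H m v \<theta> (\<lambda>t. a / (real t + 1) powr \<tau>1) (\<lambda>t. b / (real t + 1) powr \<tau>2)
                       \<rho> x0 \<omega> t i
                    - cent_est N H m v \<theta> (\<lambda>t. a_c / (real t + 1) powr \<tau>_c) u0 \<omega> t))
            \<longlonglongrightarrow> 0)"
proof -
  define lam where "lam = lambda_min (gram N H m)"
  have ray: "lam > 0 \<and> (\<forall>x. lam * (norm x)\<^sup>2 \<le> x \<bullet> (gram N H m *v x))"
    unfolding lam_def by (rule rayleigh[OF gram_sym gram_pd[OF full_rank]])
  have lam: "lam > 0" using ray by blast
  have Gpd: "\<And>x. lam * (norm x)\<^sup>2 \<le> x \<bullet> ((\<Sum>i<N. Amat H m i) *v x)" using ray unfolding gram_sum by blast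
  define \<rho>0 where "\<rho>0 = Min (\<rho> ` {..<N})"
  have rho_le: "\<rho>0 \<le> \<rho> j" if "j < N" for j unfolding \<rho>0_def using that by (intro Min_le) auto
  have e2: "0 < 2 + \<epsilon>1" using eps_pos by simp
  define A where "A = 1 / (2 + \<epsilon>1)"
  have A0: "0 < A" unfolding A_def using e2 by simp
  define \<gamma> where "\<gamma> = (A + (\<tau>1 - \<tau>2 - \<tau>0)) / 2"
  have tt: "A < \<tau>1 - \<tau>2 - \<tau>0" using tau0(2) unfolding A_def by simp
  have gam1': "A < \<gamma>" using tt unfolding \<gamma>_def by (simp add: field_simps)
  hence gam1: "1 / (2 + \<epsilon>1) < \<gamma>" unfolding A_def .
  have gam0: "0 \<le> \<gamma>" using gam1' A0 by linarith
  have t0a: "\<tau>0 < \<tau>1 - \<tau>2 - \<gamma>" using tt unfolding \<gamma>_def by (simp add: field_simps)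
  have t0b: "\<tau>0 < \<rho>0 + \<tau>2 - \<tau>1" using tau0(2) unfolding \<rho>0_def by simp
  have tau21: "\<tau>2 < \<tau>1" using tau1_big e2 by (smt (verit) divide_pos_pos max.cobounded1)
  have t1: "\<tau>0 < a * lam / real N" if "\<tau>1 = 1"
  proof -
    have "real N * \<tau>0 / lam < a" using tau1_one[OF that] unfolding lam_def .
    hence "real N * \<tau>0 < a * lam" using lam by (simp add: divide_less_eq)
    thus ?thesis using N_pos by (simp add: less_divide_eq mult.commute)
  qed
  have sym: "\<forall>i<N. \<forall>j<N. adj i j = adj j i" using graph unfolding undirected_simple_def by blast
  have AEn: "AE \<omega> in M. eventually (\<lambda>t. noise_norm N m v t \<omega> \<le> (real t + 1) powr \<gamma>) sequentially"
    by (rule noise_AE[OF P noise_indep noise_ident eps_pos moment[rule_format, of 0] gam1])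
  define CH where "CH = (\<Sum>i'<N. \<Sum>j\<in>UNIV. \<Sum>l<m i'. \<bar>H i' l j\<bar>)"
  have CH0: "CH \<ge> 0" unfolding CH_def by (intro sum_nonneg) auto
  have main: "\<forall>i<N. (\<lambda>t. (real t + 1) powr \<tau>0 *
              norm (fst (et_state N adj H m v \<theta> (\<lambda>t. a / (real t + 1) powr \<tau>1) (\<lambda>t. b / (real t + 1) powr \<tau>2) \<rho> x0 \<omega> t) i
                    - cent_est N H m v \<theta> (\<lambda>t. a / (real t + 1) powr \<tau>1) u0 \<omega> t)) \<longlonglongrightarrow> 0"
    if nb: "eventually (\<lambda>t. noise_norm N m v t \<omega> \<le> (real t + 1) powr \<gamma>) sequentially" for \<omega>
  proof -
    define al where "al = (\<lambda>t::nat. a / (real t + 1) powr \<tau>1)"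
    define be where "be = (\<lambda>t::nat. b / (real t + 1) powr \<tau>2)"
    define XX where "XX t = fst (et_state N adj H m v \<theta> al be \<rho> x0 \<omega> t)" for t
    define XXh where "XXh t = snd (et_state N adj H m v \<theta> al be \<rho> x0 \<omega> t)" for t
    define UU where "UU t = cent_est N H m v \<theta> al u0 \<omega> t" for t
    define nz where "nz t i = HTmul H m i (v i t \<omega>)" for t i
    have recX: "\<And>t i. i < N \<Longrightarrow> XX (Suc t) i = XX t i + al t *\<^sub>R (Amat H m i *v (\<theta> - XX t i) + nz t i)
                     + be t *\<^sub>R (\<Sum>j\<in>nbr N adj i. XXh t j - XX t i)"
      unfolding XX_def XXh_def nz_def nbr_def by (simp add: Let_def innov_eq)
    have recU: "\<And>t. UU (Suc t) = UU t + (al t / real N) *\<^sub>R (\<Sum>i<N. Amat H m i *v (\<theta> - UU t) + nz t i)"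
      unfolding UU_def nz_def by (simp add: innov_eq)
    have trig: "\<And>t j. j < N \<Longrightarrow> norm (XXh t j - XX t j) \<le> (real t + 1) powr (-\<rho>0)"
    proof -
      fix t j assume j: "j < N"
      have "norm (XXh t j - XX t j) \<le> (real t + 1) powr (- \<rho> j)" unfolding XX_def XXh_def by (rule et_trig)
      also have "\<dots> \<le> (real t + 1) powr (-\<rho>0)" using rho_le[OF j] by (intro q_powr_mono) simp
      finally show "norm (XXh t j - XX t j) \<le> (real t + 1) powr (-\<rho>0)" .
    qed
    have noise: "eventually (\<lambda>t. \<forall>i<N. norm (nz t i) \<le> CH * (real t + 1) powr \<gamma>) sequentially"
      using nb
    proof eventually_elim
      case (elim t)
      show ?case
      proof (intro allI impI)
        fix i assume i: "i < N"
        have "norm (nz t i) \<le> CH * noise_norm N m v t \<omega>" unfolding nz_def CH_def by (rule HT_bound[OF i])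
        also have "\<dots> \<le> CH * (real t + 1) powr \<gamma>" using elim CH0 by (rule mult_left_mono)
        finally show "norm (nz t i) \<le> CH * (real t + 1) powr \<gamma>" .
      qed
    qed
    have al: "\<And>t. al t = a * (real t + 1) powr (-\<tau>1)" unfolding al_def by (simp add: powr_minus divide_inverse)
    have be: "\<And>t. be t = b * (real t + 1) powr (-\<tau>2)" unfolding be_def by (simp add: powr_minus divide_inverse)
    have "\<forall>i<N. (\<lambda>t. (real t + 1) powr \<tau>0 * norm (XX t i - UU t)) \<longlonglongrightarrow> 0"
      by (rule det_main[OF N_pos sym conn Gpd lam recX recU trig noise al be ab taus(1) tau21 taus(3) gam0 tau0(1) t0a t0b t1])
    thus ?thesis unfolding XX_def UU_def al_def be_def .
  qed
  show ?thesis
  proof (intro allI impI)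
    fix i assume i: "i < N"
    show "AE \<omega> in M. ((\<lambda>t. (real t + 1) powr \<tau>0 *
              norm (et_est N adj H m v \<theta> (\<lambda>t. a / (real t + 1) powr \<tau>1) (\<lambda>t. b / (real t + 1) powr \<tau>2)
                       \<rho> x0 \<omega> t i
                    - cent_est N H m v \<theta> (\<lambda>t. a_c / (real t + 1) powr \<tau>_c) u0 \<omega> t))
            \<longlonglongrightarrow> 0)"
      using AEn
    proof (rule eventually_mono)
      fix \<omega> assume "eventually (\<lambda>t. noise_norm N m v t \<omega> \<le> (real t + 1) powr \<gamma>) sequentially"
      from main[OF this] i show "((\<lambda>t. (real t + 1) powr \<tau>0 *
              norm (et_est N adj H m v \<theta> (\<lambda>t. a / (real t + 1) powr \<tau>1) (\<lambda>t. b / (real t + 1) powr \<tau>2)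
                       \<rho> x0 \<omega> t i
                    - cent_est N H m v \<theta> (\<lambda>t. a_c / (real t + 1) powr \<tau>_c) u0 \<omega> t))
            \<longlonglongrightarrow> 0)" unfolding et_est_def cent by blast
    qed
  qed
qed

end
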